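(* Let $\mathcal{R}$ be a cyclic proof system induced by a trace interpretation $\iota\colon\mathcal{R}\to\mathcal{T}_\mathcal{A}$ for a (finite) activation algebra $\mathcal{A}$. Then $\mathit{strip}\colon\mathrm{R}(\mathcal{R})\to\mathcal{R}$ is a proof morphism; in particular, if $\Pi$ is a proof of $\Gamma;(\Theta,\sigma)$ in $\mathrm{R}(\mathcal{R})$, then $\mathit{strip}(\Pi)$ is a proof of $\Gamma$ in $\mathcal{R}$.
   Context: An activation algebra $\mathcal{A}=(A,\le,\vee,0,\alpha)$ is a finite join-semilattice with least element $0$ and distinguished $\alpha\neq0$; $\mathcal{T}_\mathcal{A}$ has finite sets as objects, relations $R\subseteq X\times A\times Y$ as morphisms $X\to Y$, composition $R'\circ R=\{(x,c,z)\mid\exists y,a,b:(x,a,y)\in R,(y,b,z)\in R',a\vee b=c\}$, identities $\{(x,0,x)\}$. A composable sequence $(\tau_i)$ satisfies the trace condition if there are $k_0<k_1<\cdots$ and $s_i\in\mathrm{dom}(\tau_{k_i})$ with $(s_i,\alpha,s_{i+1})\in\tau_{k_{i+1}-1}\circ\cdots\circ\tau_{k_i}$ for all $i$. Cyclic trees: a tree is a nonempty prefix-closed $T\subseteq\omega^*$ ($\le$ prefix order, $\mathrm{Chld}(t)=\{ti\in T\}$). A cyclic tree $(T,\beta)$: finite tree and partial map $\beta$ from leaves to inner nodes with $\beta(t)<t$; $t\in\mathrm{dom}(\beta)$ are buds, $\beta(t)$ companions. A branch is $\pi\in T^\omega$ with $\pi_0=\varepsilon$, $\pi_{i+1}\in\mathrm{Chld}(\pi_i)$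 if $\pi_i$ is not a leaf, and $\pi_i$ a bud with $\pi_{i+1}=\beta(\pi_i)$ if $\pi_i$ is a leaf. Derivation systems: a set $\textsc{Seq}$ of sequents, a set of rules, each rule $R$ having a conclusion and premises $(\Gamma,\Delta_1,\dots,\Delta_n)$. A preproof is $(C,\lambda,\delta)$ with $C=(T,\beta)$ a cyclic tree, $\lambda\colon T\to\textsc{Seq}$ with $\lambda(t)=\lambda(\beta(t))$ for buds, and partial $\delta$ from non-bud nodes to rules such that each non-bud $t$ is either an open leaf (not in $\mathrm{dom}(\delta)$) or $\delta(t)$ has conclusion $\lambda(t)$ and premises $\lambda(t1),\dots,\lambda(tn)$ where $\mathrm{Chld}(t)=\{t1,\dots,tn\}$. A cyclic proof system is a derivation system with a designated set of assumption-free preproofs (proofs). A trace interpretation $\iota\colon\mathcal{R}\to\mathcal{T}_\mathcal{A}$ assigns each sequent an object $\iota(\Gamma)$ and each rule $R$ with conclusion $\Gamma$ and premises $\Delta_i$ morphisms $r_i\colon\iota(\Gamma)\to\iota(\Delta_i)$; the induced cyclic proof system $\iota(\mathcal{R})$ takes as proofs the assumption-free preproofs such that along every branch $\pi$ the sequence of morphisms ($\delta(\pi_i)_j$ when $\pi_{i+1}=\pi_ij$, identity when $\pi_{i+1}=\beta(\pi_i)$) satisfies the trace condition. A preproof morphism $f\colon\mathcal{R}\to\mathcal{R}'$ maps sequents to sequents and each $\mathcal{R}$-rule with conclusion $\Gamma$ and premises $\Delta_i$ to an $\mathcal{R}'$-preproof with endsequent $f(\Gamma)$ and open leaves $f(\Delta_1),\dots,f(\Delta_n)$;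 it translates an $\mathcal{R}$-preproof $\Pi$ to the $\mathcal{R}'$-preproof $f(\Pi)$ obtained by replacing each rule application by its assigned preproof (composing at open leaves) and keeping bud–companion links. It is a proof morphism if $f(\Pi)$ is a proof whenever $\Pi$ is. Safra boards: with a fixed countable chip set $\mathcal{C}\supseteq\omega$, a Safra board on finite $X$ is $(\Theta,\sigma)$, $\Theta\subseteq\mathcal{C}$ finite linearly ordered (control), $\sigma\colon X\times A\to\mathcal{P}(\mathcal{P}(\Theta))$ with every chip in some stack; $\gamma$ covered iff it is the maximum of no stack. Transitions: $r$-successor for $r\colon X\to Y$ (move stacks: $\sigma^*(y,a)=\{S\in\sigma(x,b)\mid(x,c,y)\in r,\ a=b\vee c\}$; then for every $y$ with $\sigma^*(y,\alpha)\ne\emptyset$ add a fresh chip $\iota(y)\notin\Theta$ (distinct for distinct $y$, ordered above all old chips) on top of every stack in $\sigma^*(y,\alpha)$ and move these stacks to $(y,0)$, leaving $(y,\alpha)$ empty; control = old chips still occurring followed by the new chips); weakening (remove some stacks); population (add the empty stack to some positions $(x,0)$); $\gamma$-reset for covered $\gamma$ (replace every stack $S\ni\gamma$ by $\{z\in S\mid z\le\gamma\}$); in each case the new control consists of the chips still occurring, in the inherited order. Reset proof system $\mathrm{R}(\mathcal{R})$: sequents $\Gamma;(\Theta,\sigma)$ with $\Gamma\in\textsc{Seq}$ and $(\Theta,\sigma)$ a board on $\iota(\Gamma)$. Rules: structural rules Weak, $\textsc{Reset}_\gamma$, Pop with conclusion $\Gamma;(\Theta,\sigma)$ and one premise $\Gamma;(\Theta',\sigma')$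 where $(\Theta',\sigma')$ arises by weakening, $\gamma$-reset, or population; and for every $\mathcal{R}$-rule $R$ (conclusion $\Gamma$, premises $\Delta_i$, maps $r_i$) and board $(\Theta,\sigma)$ on $\iota(\Gamma)$, a rule with conclusion $\Gamma;(\Theta,\sigma)$ and premises $\Delta_i;(\Theta_i,\sigma_i)$, $(\Theta_i,\sigma_i)$ an $r_i$-successor of $(\Theta,\sigma)$. For a bud $t$, let $\Theta$ be the longest common prefix of the controls on the path from $\beta(t)$ to $t$; an invariant is a nonempty prefix $\theta$ of $\Theta$ such that $\textsc{Reset}_{\max(\theta)}$ is applied on that path. An assumption-free $\mathrm{R}(\mathcal{R})$-preproof is a proof iff every bud's path has an invariant. The preproof morphism $\mathit{strip}\colon\mathrm{R}(\mathcal{R})\to\mathcal{R}$ maps $\Gamma;(\Theta,\sigma)\mapsto\Gamma$, maps each structural rule to the one-node preproof of $\Gamma$ (open leaf), and maps each annotated copy of an $\mathcal{R}$-rule $R$ to the one-step preproof applying $R$. Thus $\mathit{strip}(\Pi)$ erases annotations and contracts structural-rule steps. *)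

theory Defs
  imports Main "HOL-Library.Sublist" "HOL-Library.Countable"
begin

text \<open>An activation algebra is a type 'a of class finite and bounded_semilattice_sup_bot
 (finite join-semilattice with least element bot = 0) together with alpha different from bot.
 Morphisms X -> Y are relations R contained in X x A x Y.\<close>

definition mcomp :: "('x \<times> 'a::sup \<times> 'x) set \<Rightarrow> ('x \<times> 'a \<times> 'x) set \<Rightarrow> ('x \<times> 'a \<times> 'x) set" where
  "mcomp R' R = {(x, c, z). \<exists>y a b. (x, a, y) \<in> R \<and> (y, b, z) \<in> R' \<and> c = sup a b}"

definition mid :: "'x set \<Rightarrow> ('x \<times> 'a::bot \<times> 'x) set" where
  "mid X = {(x, bot, x) | x. x \<in> X}"

text \<open>seg tau X0 m d = tau(m+d-1) o ... o tau(m), with X0 the domain of tau(m).\<close>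
fun seg :: "(nat \<Rightarrow> ('x \<times> 'a::{sup,bot} \<times> 'x) set) \<Rightarrow> 'x set \<Rightarrow> nat \<Rightarrow> nat \<Rightarrow> ('x \<times> 'a \<times> 'x) set" where
  "seg \<tau> X0 m 0 = mid X0"
| "seg \<tau> X0 m (Suc d) = mcomp (\<tau> (m + d)) (seg \<tau> X0 m d)"

text \<open>Trace condition for a composable sequence tau with tau i : X i -> X (i+1).\<close>
definition trace_cond :: "'a::{sup,bot} \<Rightarrow> (nat \<Rightarrow> 'x set) \<Rightarrow> (nat \<Rightarrow> ('x \<times> 'a \<times> 'x) set) \<Rightarrow> bool" where
  "trace_cond \<alpha> X \<tau> \<longleftrightarrow> (\<exists>k s. strict_mono k \<and> (\<forall>i. s i \<in> X (k i)) \<and>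
      (\<forall>i. (s i, \<alpha>, s (Suc i)) \<in> seg \<tau> (X (k i)) (k i) (k (Suc i) - k i)))"

definition Chld :: "nat list set \<Rightarrow> nat list \<Rightarrow> nat list set" where
  "Chld T t = {t @ [i] | i. t @ [i] \<in> T}"

definition leaf :: "nat list set \<Rightarrow> nat list \<Rightarrow> bool" where
  "leaf T t \<longleftrightarrow> Chld T t = {}"

definition is_tree :: "nat list set \<Rightarrow> bool" where
  "is_tree T \<longleftrightarrow> T \<noteq> {} \<and> (\<forall>t u. t @ u \<in> T \<longrightarrow> t \<in> T)"

definition cyclic_tree :: "nat list set \<Rightarrow> (nat list \<Rightarrow> nat list option) \<Rightarrow> bool" where
  "cyclic_tree T \<beta> \<longleftrightarrow> finite T \<and> is_tree T \<and>
     (\<forall>t\<in>T. \<forall>c. \<beta> t = Some c \<longrightarrow> leaf T t \<and> c \<in> T \<and> \<not> leaf T c \<and> strict_prefix c t)"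

definition branch :: "nat list set \<Rightarrow> (nat list \<Rightarrow> nat list option) \<Rightarrow> (nat \<Rightarrow> nat list) \<Rightarrow> bool" where
  "branch T \<beta> \<pi> \<longleftrightarrow> \<pi> 0 = [] \<and>
     (\<forall>i. \<pi> i \<in> T \<and> (if leaf T (\<pi> i) then \<beta> (\<pi> i) = Some (\<pi> (Suc i))
                        else \<pi> (Suc i) \<in> Chld T (\<pi> i)))"

text \<open>A derivation system: sequents Seq, rules Rl, each rule R with conclusion concl R and
 premise list prems R (premise i corresponds to child t @ [i], i < length (prems R)).\<close>

definition derivation_system :: "'s set \<Rightarrow> 'r set \<Rightarrow> ('r \<Rightarrow> 's) \<Rightarrow> ('r \<Rightarrow> 's list) \<Rightarrow> bool" where
  "derivation_system Seq Rl concl prems \<longleftrightarrow> (\<forall>R\<in>Rl. concl R \<in> Seq \<and> set (prems R) \<subseteq> Seq)"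

definition preproof :: "'s set \<Rightarrow> 'r set \<Rightarrow> ('r \<Rightarrow> 's) \<Rightarrow> ('r \<Rightarrow> 's list) \<Rightarrow>
    nat list set \<Rightarrow> (nat list \<Rightarrow> nat list option) \<Rightarrow> (nat list \<Rightarrow> 's) \<Rightarrow> (nat list \<Rightarrow> 'r option) \<Rightarrow> bool" where
  "preproof Seq Rl concl prems T \<beta> lab \<delta> \<longleftrightarrow>
     cyclic_tree T \<beta> \<and>
     (\<forall>t\<in>T. lab t \<in> Seq) \<and>
     (\<forall>t\<in>T. \<forall>c. \<beta> t = Some c \<longrightarrow> lab t = lab c) \<and>
     (\<forall>t\<in>T. \<beta> t \<noteq> None \<longrightarrow> \<delta> t = None) \<and>
     (\<forall>t\<in>T. \<beta> t = None \<longrightarrow>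
        (case \<delta> t of
           None \<Rightarrow> leaf T t
         | Some R \<Rightarrow> R \<in> Rl \<and> concl R = lab t \<and>
              Chld T t = {t @ [i] | i. i < length (prems R)} \<and>
              (\<forall>i < length (prems R). lab (t @ [i]) = prems R ! i)))"

definition assumption_free :: "nat list set \<Rightarrow> (nat list \<Rightarrow> nat list option) \<Rightarrow> (nat list \<Rightarrow> 'r option) \<Rightarrow> bool" where
  "assumption_free T \<beta> \<delta> \<longleftrightarrow> (\<forall>t\<in>T. \<beta> t = None \<longrightarrow> \<delta> t \<noteq> None)"

definition trace_interp :: "'s set \<Rightarrow> 'r set \<Rightarrow> ('r \<Rightarrow> 's) \<Rightarrow> ('r \<Rightarrow> 's list) \<Rightarrow>
    ('s \<Rightarrow> 'x set) \<Rightarrow> ('r \<Rightarrow> ('x \<times> 'a \<times> 'x) set list) \<Rightarrow> bool" where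
  "trace_interp Seq Rl concl prems iobj imor \<longleftrightarrow>
     (\<forall>\<Gamma>\<in>Seq. finite (iobj \<Gamma>)) \<and>
     (\<forall>R\<in>Rl. length (imor R) = length (prems R) \<and>
        (\<forall>i < length (prems R). imor R ! i \<subseteq> iobj (concl R) \<times> UNIV \<times> iobj (prems R ! i)))"

definition branch_mor :: "nat list set \<Rightarrow> (nat list \<Rightarrow> 's) \<Rightarrow> (nat list \<Rightarrow> 'r option) \<Rightarrow>
    ('s \<Rightarrow> 'x set) \<Rightarrow> ('r \<Rightarrow> ('x \<times> 'a::bot \<times> 'x) set list) \<Rightarrow> (nat \<Rightarrow> nat list) \<Rightarrow> nat \<Rightarrow> ('x \<times> 'a \<times> 'x) set" where
  "branch_mor T lab \<delta> iobj imor \<pi> i =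
     (if leaf T (\<pi> i) then mid (iobj (lab (\<pi> i)))
      else imor (the (\<delta> (\<pi> i))) ! last (\<pi> (Suc i)))"

definition iota_proof :: "'a::{sup,bot} \<Rightarrow> 's set \<Rightarrow> 'r set \<Rightarrow> ('r \<Rightarrow> 's) \<Rightarrow> ('r \<Rightarrow> 's list) \<Rightarrow>
    ('s \<Rightarrow> 'x set) \<Rightarrow> ('r \<Rightarrow> ('x \<times> 'a \<times> 'x) set list) \<Rightarrow>
    nat list set \<Rightarrow> (nat list \<Rightarrow> nat list option) \<Rightarrow> (nat list \<Rightarrow> 's) \<Rightarrow> (nat list \<Rightarrow> 'r option) \<Rightarrow> bool" where
  "iota_proof \<alpha> Seq Rl concl prems iobj imor T \<beta> lab \<delta> \<longleftrightarrow>
     preproof Seq Rl concl prems T \<beta> lab \<delta> \<and> assumption_free T \<beta> \<delta> \<and>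
     (\<forall>\<pi>. branch T \<beta> \<pi> \<longrightarrow>
        trace_cond \<alpha> (\<lambda>i. iobj (lab (\<pi> i))) (branch_mor T lab \<delta> iobj imor \<pi>))"

section \<open>Safra boards\<close>

text \<open>A board (Theta, sigma): the control Theta is a distinct list of chips (earlier = lower),
 sigma x a is the set of stacks (finite sets of chips) at position (x, a).\<close>

type_synonym ('c, 'x, 'a) board = "'c list \<times> ('x \<Rightarrow> 'a \<Rightarrow> 'c set set)"

definition board_on :: "'x set \<Rightarrow> ('c, 'x, 'a) board \<Rightarrow> bool" where
  "board_on X b \<longleftrightarrow> distinct (fst b) \<and>
     (\<forall>x a. x \<notin> X \<longrightarrow> snd b x a = {}) \<and>
     (\<forall>x a S. S \<in> snd b x a \<longrightarrow> S \<subseteq> set (fst b)) \<and>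
     (\<forall>\<gamma>\<in>set (fst b). \<exists>x a S. S \<in> snd b x a \<and> \<gamma> \<in> S)"

definition cle :: "'c list \<Rightarrow> 'c \<Rightarrow> 'c \<Rightarrow> bool" where
  "cle \<Theta> z \<gamma> \<longleftrightarrow> (\<exists>i j. i \<le> j \<and> j < length \<Theta> \<and> \<Theta> ! i = z \<and> \<Theta> ! j = \<gamma>)"

definition is_top :: "'c list \<Rightarrow> 'c set \<Rightarrow> 'c \<Rightarrow> bool" where
  "is_top \<Theta> S \<gamma> \<longleftrightarrow> \<gamma> \<in> S \<and> (\<forall>z\<in>S. cle \<Theta> z \<gamma>)"

definition covered :: "('c, 'x, 'a) board \<Rightarrow> 'c \<Rightarrow> bool" where
  "covered b \<gamma> \<longleftrightarrow> \<gamma> \<in> set (fst b) \<and> \<not> (\<exists>x a S. S \<in> snd b x a \<and> is_top (fst b) S \<gamma>)"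

definition occ :: "('x \<Rightarrow> 'a \<Rightarrow> 'c set set) \<Rightarrow> 'c set" where
  "occ \<sigma> = {z. \<exists>x a S. S \<in> \<sigma> x a \<and> z \<in> S}"

definition weak_succ :: "('c, 'x, 'a) board \<Rightarrow> ('c, 'x, 'a) board \<Rightarrow> bool" where
  "weak_succ b b' \<longleftrightarrow> (\<forall>x a. snd b' x a \<subseteq> snd b x a) \<and>
     fst b' = filter (\<lambda>z. z \<in> occ (snd b')) (fst b)"

definition pop_succ :: "'x set \<Rightarrow> ('c, 'x, 'a::bot) board \<Rightarrow> ('c, 'x, 'a) board \<Rightarrow> bool" where
  "pop_succ X b b' \<longleftrightarrow> (\<exists>P \<subseteq> X.
     snd b' = (\<lambda>x a. if a = bot \<and> x \<in> P then insert {} (snd b x a) else snd b x a)) \<and>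
     fst b' = filter (\<lambda>z. z \<in> occ (snd b')) (fst b)"

definition reset_succ :: "'c \<Rightarrow> ('c, 'x, 'a) board \<Rightarrow> ('c, 'x, 'a) board \<Rightarrow> bool" where
  "reset_succ \<gamma> b b' \<longleftrightarrow> covered b \<gamma> \<and>
     snd b' = (\<lambda>x a. (\<lambda>S. if \<gamma> \<in> S then {z\<in>S. cle (fst b) z \<gamma>} else S) ` snd b x a) \<and>
     fst b' = filter (\<lambda>z. z \<in> occ (snd b')) (fst b)"

definition moved :: "('x \<times> 'a::sup \<times> 'x) set \<Rightarrow> ('x \<Rightarrow> 'a \<Rightarrow> 'c set set) \<Rightarrow> 'x \<Rightarrow> 'a \<Rightarrow> 'c set set" where
  "moved r \<sigma> y a = {S. \<exists>x b c. S \<in> \<sigma> x b \<and> (x, c, y) \<in> r \<and> a = sup b c}"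

definition mor_succ :: "'a::{sup,bot} \<Rightarrow> ('x \<times> 'a \<times> 'x) set \<Rightarrow> ('c, 'x, 'a) board \<Rightarrow> ('c, 'x, 'a) board \<Rightarrow> bool" where
  "mor_succ \<alpha> r b b' \<longleftrightarrow> (\<exists>(fresh :: 'x \<Rightarrow> 'c) new.
     (let \<sigma>s = moved r (snd b); Y\<alpha> = {y. \<sigma>s y \<alpha> \<noteq> {}} in
       inj_on fresh Y\<alpha> \<and> (\<forall>y\<in>Y\<alpha>. fresh y \<notin> set (fst b)) \<and>
       distinct new \<and> set new = fresh ` Y\<alpha> \<and>
       snd b' = (\<lambda>y a. if y \<in> Y\<alpha> then
                          (if a = \<alpha> then {}
                           else if a = bot then \<sigma>s y bot \<union> insert (fresh y) ` \<sigma>s y \<alpha>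
                           else \<sigma>s y a)
                        else \<sigma>s y a) \<and>
       fst b' = filter (\<lambda>z. z \<in> occ (snd b')) (fst b) @ new))"

section \<open>The reset proof system R(R)\<close>

datatype ('s, 'c, 'x, 'a, 'r) rrule =
    RWeak 's "('c, 'x, 'a) board" "('c, 'x, 'a) board"
  | RReset 's 'c "('c, 'x, 'a) board" "('c, 'x, 'a) board"
  | RPop 's "('c, 'x, 'a) board" "('c, 'x, 'a) board"
  | RAnn 'r "('c, 'x, 'a) board" "('c, 'x, 'a) board list"

fun rconcl :: "('r \<Rightarrow> 's) \<Rightarrow> ('s, 'c, 'x, 'a, 'r) rrule \<Rightarrow> 's \<times> ('c, 'x, 'a) board" where
  "rconcl concl (RWeak \<Gamma> b b') = (\<Gamma>, b)"
| "rconcl concl (RReset \<Gamma> \<gamma> b b') = (\<Gamma>, b)"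
| "rconcl concl (RPop \<Gamma> b b') = (\<Gamma>, b)"
| "rconcl concl (RAnn R b bs) = (concl R, b)"

fun rprems :: "('r \<Rightarrow> 's list) \<Rightarrow> ('s, 'c, 'x, 'a, 'r) rrule \<Rightarrow> ('s \<times> ('c, 'x, 'a) board) list" where
  "rprems prems (RWeak \<Gamma> b b') = [(\<Gamma>, b')]"
| "rprems prems (RReset \<Gamma> \<gamma> b b') = [(\<Gamma>, b')]"
| "rprems prems (RPop \<Gamma> b b') = [(\<Gamma>, b')]"
| "rprems prems (RAnn R b bs) = zip (prems R) bs"

definition RSeq :: "'s set \<Rightarrow> ('s \<Rightarrow> 'x set) \<Rightarrow> ('s \<times> ('c, 'x, 'a) board) set" where
  "RSeq Seq iobj = {(\<Gamma>, b). \<Gamma> \<in> Seq \<and> board_on (iobj \<Gamma>) b}"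

fun rrule_ok :: "'a::{sup,bot} \<Rightarrow> 's set \<Rightarrow> 'r set \<Rightarrow> ('r \<Rightarrow> 's) \<Rightarrow> ('r \<Rightarrow> 's list) \<Rightarrow>
    ('s \<Rightarrow> 'x set) \<Rightarrow> ('r \<Rightarrow> ('x \<times> 'a \<times> 'x) set list) \<Rightarrow> ('s, 'c, 'x, 'a, 'r) rrule \<Rightarrow> bool" where
  "rrule_ok \<alpha> Seq Rl concl prems iobj imor (RWeak \<Gamma> b b') \<longleftrightarrow>
     \<Gamma> \<in> Seq \<and> board_on (iobj \<Gamma>) b \<and> weak_succ b b'"
| "rrule_ok \<alpha> Seq Rl concl prems iobj imor (RReset \<Gamma> \<gamma> b b') \<longleftrightarrow>
     \<Gamma> \<in> Seq \<and> board_on (iobj \<Gamma>) b \<and> reset_succ \<gamma> b b'"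
| "rrule_ok \<alpha> Seq Rl concl prems iobj imor (RPop \<Gamma> b b') \<longleftrightarrow>
     \<Gamma> \<in> Seq \<and> board_on (iobj \<Gamma>) b \<and> pop_succ (iobj \<Gamma>) b b'"
| "rrule_ok \<alpha> Seq Rl concl prems iobj imor (RAnn R b bs) \<longleftrightarrow>
     R \<in> Rl \<and> board_on (iobj (concl R)) b \<and> length bs = length (prems R) \<and>
     (\<forall>i < length (prems R). mor_succ \<alpha> (imor R ! i) b (bs ! i))"

definition RRules :: "'a::{sup,bot} \<Rightarrow> 's set \<Rightarrow> 'r set \<Rightarrow> ('r \<Rightarrow> 's) \<Rightarrow> ('r \<Rightarrow> 's list) \<Rightarrow>
    ('s \<Rightarrow> 'x set) \<Rightarrow> ('r \<Rightarrow> ('x \<times> 'a \<times> 'x) set list) \<Rightarrow> ('s, 'c, 'x, 'a, 'r) rrule set" where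
  "RRules \<alpha> Seq Rl concl prems iobj imor = {\<rho>. rrule_ok \<alpha> Seq Rl concl prems iobj imor \<rho>}"

fun lcp2 :: "'c list \<Rightarrow> 'c list \<Rightarrow> 'c list" where
  "lcp2 (x # xs) (y # ys) = (if x = y then x # lcp2 xs ys else [])"
| "lcp2 _ _ = []"

fun lcp :: "'c list list \<Rightarrow> 'c list" where
  "lcp [] = []"
| "lcp (l # ls) = fold (\<lambda>m acc. lcp2 acc m) ls l"

definition path_nodes :: "nat list \<Rightarrow> nat list \<Rightarrow> nat list list" where
  "path_nodes t c = map (\<lambda>k. take k t) [length c..<Suc (length t)]"

definition has_invariant :: "(nat list \<Rightarrow> nat list option) \<Rightarrow> (nat list \<Rightarrow> 's \<times> ('c, 'x, 'a) board) \<Rightarrow>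
    (nat list \<Rightarrow> ('s, 'c, 'x, 'a, 'r) rrule option) \<Rightarrow> nat list \<Rightarrow> bool" where
  "has_invariant \<beta> lab \<delta> t \<longleftrightarrow>
     (case \<beta> t of None \<Rightarrow> True
      | Some c \<Rightarrow>
         (let P = path_nodes t c; \<Theta> = lcp (map (\<lambda>p. fst (snd (lab p))) P) in
           \<exists>\<theta>. \<theta> \<noteq> [] \<and> prefix \<theta> \<Theta> \<and>
             (\<exists>p\<in>set P. \<exists>\<Gamma> b b'. \<delta> p = Some (RReset \<Gamma> (last \<theta>) b b'))))"

definition reset_proof :: "'a::{sup,bot} \<Rightarrow> 's set \<Rightarrow> 'r set \<Rightarrow> ('r \<Rightarrow> 's) \<Rightarrow> ('r \<Rightarrow> 's list) \<Rightarrow>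
    ('s \<Rightarrow> 'x set) \<Rightarrow> ('r \<Rightarrow> ('x \<times> 'a \<times> 'x) set list) \<Rightarrow>
    nat list set \<Rightarrow> (nat list \<Rightarrow> nat list option) \<Rightarrow> (nat list \<Rightarrow> 's \<times> ('c, 'x, 'a) board) \<Rightarrow>
    (nat list \<Rightarrow> ('s, 'c, 'x, 'a, 'r) rrule option) \<Rightarrow> bool" where
  "reset_proof \<alpha> Seq Rl concl prems iobj imor T \<beta> lab \<delta> \<longleftrightarrow>
     preproof (RSeq Seq iobj) (RRules \<alpha> Seq Rl concl prems iobj imor) (rconcl concl) (rprems prems) T \<beta> lab \<delta> \<and>
     assumption_free T \<beta> \<delta> \<and>
     (\<forall>t\<in>T. \<beta> t \<noteq> None \<longrightarrow> has_invariant \<beta> lab \<delta> t)"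

section \<open>The preproof morphism strip\<close>

text \<open>strip erases the board annotations and contracts structural-rule steps: a node carrying a
 structural rule is identified with its unique child. Concretely, a node t of the R(R)-preproof
 that does not carry a structural rule becomes the node naddr t of strip(Pi), obtained by keeping
 only the child indices taken at nodes carrying an annotated R-rule.\<close>

definition is_ann :: "(nat list \<Rightarrow> ('s, 'c, 'x, 'a, 'r) rrule option) \<Rightarrow> nat list \<Rightarrow> bool" where
  "is_ann \<delta> t \<longleftrightarrow> (case \<delta> t of Some (RAnn R b bs) \<Rightarrow> True | _ \<Rightarrow> False)"

definition is_struct :: "(nat list \<Rightarrow> ('s, 'c, 'x, 'a, 'r) rrule option) \<Rightarrow> nat list \<Rightarrow> bool" where
  "is_struct \<delta> t \<longleftrightarrow> \<delta> t \<noteq> None \<and> \<not> is_ann \<delta> t"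

definition naddr :: "(nat list \<Rightarrow> ('s, 'c, 'x, 'a, 'r) rrule option) \<Rightarrow> nat list \<Rightarrow> nat list" where
  "naddr \<delta> t = concat (map (\<lambda>j. if is_ann \<delta> (take j t) then [t ! j] else []) [0..<length t])"

definition NS :: "nat list set \<Rightarrow> (nat list \<Rightarrow> ('s, 'c, 'x, 'a, 'r) rrule option) \<Rightarrow> nat list set" where
  "NS T \<delta> = {t\<in>T. \<not> is_struct \<delta> t}"

definition eff :: "(nat list \<Rightarrow> ('s, 'c, 'x, 'a, 'r) rrule option) \<Rightarrow> nat list \<Rightarrow> nat list" where
  "eff \<delta> t = t @ replicate (LEAST k. \<not> is_struct \<delta> (t @ replicate k 0)) 0"

definition strip_T :: "nat list set \<Rightarrow> (nat list \<Rightarrow> ('s, 'c, 'x, 'a, 'r) rrule option) \<Rightarrow> nat list set" where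
  "strip_T T \<delta> = naddr \<delta> ` NS T \<delta>"

definition strip_node :: "nat list set \<Rightarrow> (nat list \<Rightarrow> ('s, 'c, 'x, 'a, 'r) rrule option) \<Rightarrow> nat list \<Rightarrow> nat list" where
  "strip_node T \<delta> u = (SOME t. t \<in> NS T \<delta> \<and> naddr \<delta> t = u)"

definition strip_lab :: "nat list set \<Rightarrow> (nat list \<Rightarrow> ('s, 'c, 'x, 'a, 'r) rrule option) \<Rightarrow>
    (nat list \<Rightarrow> 's \<times> ('c, 'x, 'a) board) \<Rightarrow> nat list \<Rightarrow> 's" where
  "strip_lab T \<delta> lab u = fst (lab (strip_node T \<delta> u))"

definition strip_beta :: "nat list set \<Rightarrow> (nat list \<Rightarrow> nat list option) \<Rightarrow>
    (nat list \<Rightarrow> ('s, 'c, 'x, 'a, 'r) rrule option) \<Rightarrow> nat list \<Rightarrow> nat list option" where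
  "strip_beta T \<beta> \<delta> u =
     (if u \<in> strip_T T \<delta> then map_option (\<lambda>c. naddr \<delta> (eff \<delta> c)) (\<beta> (strip_node T \<delta> u)) else None)"

definition strip_delta :: "nat list set \<Rightarrow> (nat list \<Rightarrow> ('s, 'c, 'x, 'a, 'r) rrule option) \<Rightarrow> nat list \<Rightarrow> 'r option" where
  "strip_delta T \<delta> u =
     (if u \<in> strip_T T \<delta> then
        (case \<delta> (strip_node T \<delta> u) of Some (RAnn R b bs) \<Rightarrow> Some R | _ \<Rightarrow> None)
      else None)"

end

theory Submission
  imports Defs "HOL-Library.Infinite_Set"
begin

locale RP =
  fixes \<alpha> :: "'a::{finite, bounded_semilattice_sup_bot}"
    and Seq :: "'s set" and Rl :: "'r set"
    and concl :: "'r \<Rightarrow> 's" and prems :: "'r \<Rightarrow> 's list"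
    and iobj :: "'s \<Rightarrow> 'x set" and imor :: "'r \<Rightarrow> ('x \<times> 'a \<times> 'x) set list"
    and T :: "nat list set" and \<beta> :: "nat list \<Rightarrow> nat list option"
    and lab :: "nat list \<Rightarrow> 's \<times> ('c, 'x, 'a) board"
    and \<delta> :: "nat list \<Rightarrow> ('s, 'c, 'x, 'a, 'r) rrule option"
  assumes alpha: "\<alpha> \<noteq> bot"
    and TI: "trace_interp Seq Rl concl prems iobj imor"
    and RPf: "reset_proof \<alpha> Seq Rl concl prems iobj imor T \<beta> lab \<delta>"
begin

lemma PP: "preproof (RSeq Seq iobj) (RRules \<alpha> Seq Rl concl prems iobj imor) (rconcl concl) (rprems prems) T \<beta> lab \<delta>"
  using RPf by (simp add: reset_proof_def)
lemma AF: "assumption_free T \<beta> \<delta>" using RPf by (simp add: reset_proof_def)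
lemma INV: "t \<in> T \<Longrightarrow> \<beta> t \<noteq> None \<Longrightarrow> has_invariant \<beta> lab \<delta> t"
  using RPf by (simp add: reset_proof_def)
lemma cyc: "cyclic_tree T \<beta>" using PP by (simp add: preproof_def)
lemma PP_lab: "\<forall>t\<in>T. lab t \<in> RSeq Seq iobj" using PP unfolding preproof_def by blast
lemma PP_bud: "\<forall>t\<in>T. \<forall>c. \<beta> t = Some c \<longrightarrow> lab t = lab c" using PP unfolding preproof_def by blast
lemma PP_budd: "\<forall>t\<in>T. \<beta> t \<noteq> None \<longrightarrow> \<delta> t = None" using PP unfolding preproof_def by blast
lemma cyc_b: "\<forall>t\<in>T. \<forall>c. \<beta> t = Some c \<longrightarrow> leaf T t \<and> c \<in> T \<and> \<not> leaf T c \<and> strict_prefix c t"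
  using cyc unfolding cyclic_tree_def by blast
lemma finT: "finite T" using cyc by (simp add: cyclic_tree_def)
lemma treeT: "is_tree T" using cyc by (simp add: cyclic_tree_def)
lemma pref_closed: "t @ u \<in> T \<Longrightarrow> t \<in> T" using treeT by (auto simp: is_tree_def)
lemma root_in: "[] \<in> T" using treeT unfolding is_tree_def by (metis append_Nil equals0I)

lemma lab_RSeq: "t \<in> T \<Longrightarrow> fst (lab t) \<in> Seq \<and> board_on (iobj (fst (lab t))) (snd (lab t))"
proof -
  assume "t \<in> T" with PP_lab have "lab t \<in> RSeq Seq iobj" by blast
  then show ?thesis unfolding RSeq_def by (cases "lab t") auto
qed

lemma bud_props: assumes "t \<in> T" "\<beta> t = Some c"
  shows "leaf T t \<and> c \<in> T \<and> \<not> leaf T c \<and> strict_prefix c t \<and> lab t = lab c \<and> \<delta> t = None"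
  using assms cyc_b PP_bud PP_budd by blast

lemma leaf_child: "leaf T t \<Longrightarrow> t @ [i] \<notin> T"
  by (auto simp: leaf_def Chld_def)

lemma rule_props: assumes "t \<in> T" "\<beta> t = None"
  shows "\<exists>\<rho>. \<delta> t = Some \<rho> \<and> rrule_ok \<alpha> Seq Rl concl prems iobj imor \<rho> \<and> rconcl concl \<rho> = lab t \<and>
     (\<forall>i. t @ [i] \<in> T \<longleftrightarrow> i < length (rprems prems \<rho>)) \<and>
     (\<forall>i < length (rprems prems \<rho>). lab (t @ [i]) = rprems prems \<rho> ! i)"
proof -
  from AF assms obtain \<rho> where d: "\<delta> t = Some \<rho>" by (auto simp: assumption_free_def)
  have "\<forall>t\<in>T. \<beta> t = None \<longrightarrow>
        (case \<delta> t of
           None \<Rightarrow> leaf T t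
         | Some R \<Rightarrow> R \<in> RRules \<alpha> Seq Rl concl prems iobj imor \<and> rconcl concl R = lab t \<and>
              Chld T t = {t @ [i] | i. i < length (rprems prems R)} \<and>
              (\<forall>i < length (rprems prems R). lab (t @ [i]) = rprems prems R ! i))"
    using PP unfolding preproof_def by blast
  with assms d have "\<rho> \<in> RRules \<alpha> Seq Rl concl prems iobj imor \<and> rconcl concl \<rho> = lab t \<and>
              Chld T t = {t @ [i] | i. i < length (rprems prems \<rho>)} \<and>
              (\<forall>i < length (rprems prems \<rho>). lab (t @ [i]) = rprems prems \<rho> ! i)"
    by auto
  moreover have "Chld T t = {t @ [i] | i. i < length (rprems prems \<rho>)} \<Longrightarrow> (\<forall>i. t @ [i] \<in> T \<longleftrightarrow> i < length (rprems prems \<rho>))"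
  proof -
    assume h: "Chld T t = {t @ [i] | i. i < length (rprems prems \<rho>)}"
    have "t @ [i] \<in> T \<longleftrightarrow> t @ [i] \<in> Chld T t" for i by (auto simp: Chld_def)
    then show ?thesis unfolding h by auto
  qed
  ultimately show ?thesis using d unfolding RRules_def by blast
qed

lemma is_ann_iff: "is_ann \<delta> t \<longleftrightarrow> (\<exists>R b bs. \<delta> t = Some (RAnn R b bs))"
  unfolding is_ann_def by (auto split: option.splits rrule.splits)

lemma node_cases: assumes "t \<in> T"
  obtains (bud) c where "\<beta> t = Some c" "\<delta> t = None"
  | (struct) "is_struct \<delta> t" "\<beta> t = None"
  | (ann) R b bs where "\<delta> t = Some (RAnn R b bs)" "\<beta> t = None"
proof (cases "\<beta> t")
  case None
  with rule_props[OF assms] obtain \<rho> where "\<delta> t = Some \<rho>" by blast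
  then show ?thesis using None that unfolding is_struct_def is_ann_iff by (cases \<rho>) auto
next
  case (Some c) then show ?thesis using bud_props[OF assms Some] that by auto
qed

lemma struct_props: assumes "t \<in> T" "is_struct \<delta> t"
  shows "\<beta> t = None \<and> (\<forall>i. t @ [i] \<in> T \<longleftrightarrow> i = 0) \<and> fst (lab (t @ [0])) = fst (lab t) \<and>
    (weak_succ (snd (lab t)) (snd (lab (t @ [0]))) \<or> pop_succ (iobj (fst (lab t))) (snd (lab t)) (snd (lab (t @ [0]))) \<or>
     (\<exists>\<gamma>. reset_succ \<gamma> (snd (lab t)) (snd (lab (t @ [0]))) \<and>
       \<delta> t = Some (RReset (fst (lab t)) \<gamma> (snd (lab t)) (snd (lab (t @ [0]))))))"
proof -
  have bN: "\<beta> t = None" using assms(2) PP_budd assms(1) unfolding is_struct_def by (cases "\<beta> t") auto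
  from rule_props[OF assms(1) bN] obtain \<rho> where r: "\<delta> t = Some \<rho>" "rrule_ok \<alpha> Seq Rl concl prems iobj imor \<rho>"
    "rconcl concl \<rho> = lab t" "(\<forall>i. t @ [i] \<in> T \<longleftrightarrow> i < length (rprems prems \<rho>))"
    "(\<forall>i < length (rprems prems \<rho>). lab (t @ [i]) = rprems prems \<rho> ! i)" by blast
  show ?thesis
  proof (cases \<rho>)
    case (RWeak \<Gamma> b b')
    with r have "lab t = (\<Gamma>,b)" "lab (t@[0]) = (\<Gamma>,b')" "weak_succ b b'" "\<forall>i. t@[i]\<in>T \<longleftrightarrow> i = 0" by auto
    then show ?thesis using bN by simp
  next
    case (RPop \<Gamma> b b')
    with r have "lab t = (\<Gamma>,b)" "lab (t@[0]) = (\<Gamma>,b')" "pop_succ (iobj \<Gamma>) b b'" "\<forall>i. t@[i]\<in>T \<longleftrightarrow> i = 0" by auto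
    then show ?thesis using bN by simp
  next
    case (RReset \<Gamma> \<gamma> b b')
    with r have "lab t = (\<Gamma>,b)" "lab (t@[0]) = (\<Gamma>,b')" "reset_succ \<gamma> b b'" "\<forall>i. t@[i]\<in>T \<longleftrightarrow> i = 0" by auto
    then show ?thesis using bN r(1) RReset by simp
  next
    case (RAnn R b bs)
    with r(1) assms(2) show ?thesis unfolding is_struct_def is_ann_def by simp
  qed
qed

lemma ann_props: assumes "t \<in> T" "\<delta> t = Some (RAnn R b bs)"
  shows "\<beta> t = None \<and> R \<in> Rl \<and> lab t = (concl R, b) \<and> length bs = length (prems R) \<and>
    (\<forall>i. t @ [i] \<in> T \<longleftrightarrow> i < length (prems R)) \<and>
    (\<forall>i < length (prems R). lab (t @ [i]) = (prems R ! i, bs ! i) \<and> mor_succ \<alpha> (imor R ! i) b (bs ! i))"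
proof -
  have bN: "\<beta> t = None" using assms(2) PP_budd assms(1) by (cases "\<beta> t") auto
  from rule_props[OF assms(1) bN] assms(2) have r: "rrule_ok \<alpha> Seq Rl concl prems iobj imor (RAnn R b bs)"
    "rconcl concl (RAnn R b bs) = lab t" "(\<forall>i. t @ [i] \<in> T \<longleftrightarrow> i < length (rprems prems (RAnn R b bs)))"
    "(\<forall>i < length (rprems prems (RAnn R b bs)). lab (t @ [i]) = rprems prems (RAnn R b bs) ! i)" by auto
  from r(1) have l: "length bs = length (prems R)" "R \<in> Rl" "\<forall>i < length (prems R). mor_succ \<alpha> (imor R ! i) b (bs ! i)" by auto
  show ?thesis using r l bN by auto
qed

end

lemma naddr_Nil[simp]: "naddr \<delta> [] = []" by (simp add: naddr_def)

lemma naddr_snoc: "naddr \<delta> (t @ [i]) = naddr \<delta> t @ (if is_ann \<delta> t then [i] else [])"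
proof -
  have e: "map (\<lambda>j. if is_ann \<delta> (take j (t @ [i])) then [(t @ [i]) ! j] else []) [0..<length t] =
        map (\<lambda>j. if is_ann \<delta> (take j t) then [t ! j] else []) [0..<length t]"
    by (rule map_cong[OF refl]) (simp add: nth_append)
  have "naddr \<delta> (t @ [i]) = concat (map (\<lambda>j. if is_ann \<delta> (take j (t @ [i])) then [(t @ [i]) ! j] else []) [0..<length t]) @ (if is_ann \<delta> t then [i] else [])"
    unfolding naddr_def by simp
  then show ?thesis unfolding e naddr_def .
qed

lemma naddr_prefix: "prefix (naddr \<delta> s) (naddr \<delta> (s @ w))"
proof (induction w rule: rev_induct)
  case Nil then show ?case by simp
next
  case (snoc x xs) then show ?case
    by (metis append.assoc naddr_snoc prefix_append)
qed

lemma naddr_rep: "(\<forall>j<k. \<not> is_ann \<delta> (t @ replicate j 0)) \<Longrightarrow> naddr \<delta> (t @ replicate k 0) = naddr \<delta> t"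
proof (induction k)
  case 0 then show ?case by simp
next
  case (Suc k)
  have "t @ replicate (Suc k) 0 = (t @ replicate k 0) @ [0]" by (simp add: replicate_append_same[symmetric])
  then show ?case using Suc naddr_snoc[of \<delta> "t @ replicate k 0"] by simp
qed

lemma eff_char: assumes "\<forall>j<k. is_struct \<delta> (t @ replicate j 0)" "\<not> is_struct \<delta> (t @ replicate k 0)"
  shows "eff \<delta> t = t @ replicate k 0"
proof -
  have "(LEAST k. \<not> is_struct \<delta> (t @ replicate k 0)) = k"
    by (rule Least_equality) (use assms in \<open>auto simp: not_less[symmetric]\<close>)
  then show ?thesis by (simp add: eff_def)
qed

definition dec' :: "(nat list \<Rightarrow> ('s, 'c, 'x, 'a, 'r) rrule option) \<Rightarrow> nat list \<Rightarrow> nat list" where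
  "dec' \<delta> u = fold (\<lambda>i d. eff \<delta> d @ [i]) u []"

lemma dec'_Nil[simp]: "dec' \<delta> [] = []" by (simp add: dec'_def)
lemma dec'_snoc[simp]: "dec' \<delta> (u @ [i]) = eff \<delta> (dec' \<delta> u) @ [i]" by (simp add: dec'_def)

context RP begin

lemmas nc = node_cases[consumes 1, case_names bud struct ann]

lemma struct_not_ann: "is_struct \<delta> t \<Longrightarrow> \<not> is_ann \<delta> t" by (simp add: is_struct_def)

lemma eff_ex: assumes "t \<in> T"
  shows "\<exists>k. (\<forall>j<k. is_struct \<delta> (t @ replicate j 0)) \<and> \<not> is_struct \<delta> (t @ replicate k 0) \<and> (\<forall>j\<le>k. t @ replicate j 0 \<in> T)"
proof -
  have inT: "t @ replicate j 0 \<in> T" if "\<forall>i<j. is_struct \<delta> (t @ replicate i 0)" for j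
    using that
  proof (induction j)
    case 0 then show ?case using assms by simp
  next
    case (Suc j)
    then have "t @ replicate j 0 \<in> T" "is_struct \<delta> (t @ replicate j 0)" by auto
    then have "(t @ replicate j 0) @ [0] \<in> T" using struct_props by blast
    then show ?case by (simp add: replicate_append_same[symmetric])
  qed
  have "\<exists>k. \<not> is_struct \<delta> (t @ replicate k 0)"
  proof (rule ccontr)
    assume "\<not> ?thesis"
    then have "\<forall>j. t @ replicate j 0 \<in> T" using inT by blast
    then have "range (\<lambda>j. t @ replicate j 0) \<subseteq> T" by auto
    then have "finite (range (\<lambda>j. t @ replicate j (0::nat)))" using finT finite_subset by blast
    moreover have "inj (\<lambda>j. t @ replicate j (0::nat))" by (rule injI) simp
    ultimately have "finite (UNIV :: nat set)" using finite_imageD by blast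
    then show False by simp
  qed
  then obtain k where k: "\<not> is_struct \<delta> (t @ replicate k 0)" "\<forall>j<k. is_struct \<delta> (t @ replicate j 0)"
    using exists_least_iff[of "\<lambda>k. \<not> is_struct \<delta> (t @ replicate k 0)"] by blast
  then show ?thesis using inT by (intro exI[of _ k]) auto
qed

lemma eff_props: assumes "t \<in> T"
  shows "eff \<delta> t \<in> T \<and> \<not> is_struct \<delta> (eff \<delta> t) \<and> naddr \<delta> (eff \<delta> t) = naddr \<delta> t \<and>
     fst (lab (eff \<delta> t)) = fst (lab t) \<and> prefix t (eff \<delta> t)"
proof -
  obtain k where k: "\<forall>j<k. is_struct \<delta> (t @ replicate j 0)" "\<not> is_struct \<delta> (t @ replicate k 0)"
    "\<forall>j\<le>k. t @ replicate j 0 \<in> T" using eff_ex[OF assms] by blast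
  have e: "eff \<delta> t = t @ replicate k 0" using eff_char k by blast
  have "fst (lab (t @ replicate j 0)) = fst (lab t)" if "j \<le> k" for j
    using that
  proof (induction j)
    case 0 then show ?case by simp
  next
    case (Suc j)
    then have "t @ replicate j 0 \<in> T" "is_struct \<delta> (t @ replicate j 0)" using k by auto
    then have "fst (lab ((t @ replicate j 0) @ [0])) = fst (lab (t @ replicate j 0))" using struct_props by blast
    then show ?case using Suc by (simp add: replicate_append_same[symmetric])
  qed
  then show ?thesis using k e naddr_rep[of k \<delta> t] struct_not_ann by auto
qed

lemma eff_nonstruct: "\<not> is_struct \<delta> t \<Longrightarrow> eff \<delta> t = t"
  using eff_char[of 0 \<delta> t] by simp

lemma eff_struct: assumes "t \<in> T" "is_struct \<delta> t" shows "eff \<delta> (t @ [0]) = eff \<delta> t"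
proof -
  have "t @ [0] \<in> T" using struct_props assms by blast
  then obtain k where k: "\<forall>j<k. is_struct \<delta> ((t@[0]) @ replicate j 0)" "\<not> is_struct \<delta> ((t@[0]) @ replicate k 0)"
    using eff_ex by blast
  have rs: "(t @ [0]) @ replicate j 0 = t @ replicate (Suc j) 0" for j by (simp add: replicate_append_same[symmetric])
  have "\<forall>j<Suc k. is_struct \<delta> (t @ replicate j 0)"
  proof (intro allI impI)
    fix j assume "j < Suc k"
    then show "is_struct \<delta> (t @ replicate j 0)" using k(1) assms(2) rs by (cases j) auto
  qed
  then have "eff \<delta> t = t @ replicate (Suc k) 0" using eff_char k(2) rs by metis
  moreover have "eff \<delta> (t @ [0]) = (t @ [0]) @ replicate k 0" using eff_char k by blast
  ultimately show ?thesis using rs by simp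
qed

lemma eff_NS: "t \<in> T \<Longrightarrow> eff \<delta> t \<in> NS T \<delta>"
  using eff_props by (simp add: NS_def)

lemma dec_lemma: "t \<in> T \<Longrightarrow> \<exists>k. t = dec' \<delta> (naddr \<delta> t) @ replicate k 0 \<and> (\<forall>j<k. is_struct \<delta> (dec' \<delta> (naddr \<delta> t) @ replicate j 0))"
proof (induction t rule: rev_induct)
  case Nil then show ?case by simp
next
  case (snoc i s)
  then have sT: "s \<in> T" using pref_closed by blast
  with snoc.IH obtain k where k: "s = dec' \<delta> (naddr \<delta> s) @ replicate k 0" "\<forall>j<k. is_struct \<delta> (dec' \<delta> (naddr \<delta> s) @ replicate j 0)"
    by blast
  show ?case using sT
  proof (cases rule: nc)
    case (bud c) then show ?thesis using bud_props[OF sT] leaf_child snoc.prems by blast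
  next
    case struct
    then have "i = 0" using struct_props sT snoc.prems by blast
    moreover have "naddr \<delta> (s @ [i]) = naddr \<delta> s" using struct struct_not_ann by (simp add: naddr_snoc)
    ultimately show ?thesis using k struct
      by (intro exI[of _ "Suc k"]) (auto simp: less_Suc_eq replicate_append_same[symmetric])
  next
    case (ann R b bs)
    then have a: "is_ann \<delta> s" by (simp add: is_ann_iff)
    then have "\<not> is_struct \<delta> (dec' \<delta> (naddr \<delta> s) @ replicate k 0)" using k(1) by (simp add: is_struct_def)
    then have "eff \<delta> (dec' \<delta> (naddr \<delta> s)) = s" using eff_char k by metis
    then show ?thesis using a by (intro exI[of _ 0]) (simp add: naddr_snoc)
  qed
qed

lemma NS_dec: assumes "t \<in> NS T \<delta>" shows "eff \<delta> (dec' \<delta> (naddr \<delta> t)) = t"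
proof -
  from assms have tT: "t \<in> T" and ns: "\<not> is_struct \<delta> t" by (auto simp: NS_def)
  from dec_lemma[OF tT] obtain k where "t = dec' \<delta> (naddr \<delta> t) @ replicate k 0" "\<forall>j<k. is_struct \<delta> (dec' \<delta> (naddr \<delta> t) @ replicate j 0)"
    by blast
  then show ?thesis using eff_char ns by metis
qed

lemma naddr_inj: "t1 \<in> NS T \<delta> \<Longrightarrow> t2 \<in> NS T \<delta> \<Longrightarrow> naddr \<delta> t1 = naddr \<delta> t2 \<Longrightarrow> t1 = t2"
  using NS_dec by metis

lemma strip_node_eq: assumes "t \<in> NS T \<delta>" shows "strip_node T \<delta> (naddr \<delta> t) = t"
proof -
  have "strip_node T \<delta> (naddr \<delta> t) \<in> NS T \<delta> \<and> naddr \<delta> (strip_node T \<delta> (naddr \<delta> t)) = naddr \<delta> t"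
    unfolding strip_node_def by (rule someI[of _ t]) (use assms in auto)
  then show ?thesis using naddr_inj assms by blast
qed

lemma sT_iff: "u \<in> strip_T T \<delta> \<longleftrightarrow> (\<exists>t\<in>NS T \<delta>. naddr \<delta> t = u)"
  by (auto simp: strip_T_def)

lemma sT_node: assumes "u \<in> strip_T T \<delta>"
  shows "strip_node T \<delta> u \<in> NS T \<delta> \<and> naddr \<delta> (strip_node T \<delta> u) = u"
  using assms strip_node_eq by (auto simp: strip_T_def)

lemma sT_prefix: "t \<in> T \<Longrightarrow> prefix u (naddr \<delta> t) \<Longrightarrow> u \<in> strip_T T \<delta>"
proof (induction t arbitrary: u rule: rev_induct)
  case Nil then have "u = []" by simp
  then show ?case using eff_NS[of "[]"] eff_props[of "[]"] root_in sT_iff by auto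
next
  case (snoc i s)
  then have sT: "s \<in> T" using pref_closed by blast
  show ?case
  proof (cases "prefix u (naddr \<delta> s)")
    case True then show ?thesis using snoc.IH sT by blast
  next
    case False
    with snoc.prems have "u = naddr \<delta> (s @ [i])"
      by (auto simp: naddr_snoc split: if_splits)
    then show ?thesis using eff_NS[OF snoc.prems(1)] eff_props[OF snoc.prems(1)] sT_iff by metis
  qed
qed

lemma sT_child: assumes "u @ [i] \<in> strip_T T \<delta>"
  shows "u \<in> strip_T T \<delta> \<and> strip_node T \<delta> u @ [i] \<in> T \<and> is_ann \<delta> (strip_node T \<delta> u)"
proof -
  obtain t' where t': "t' \<in> NS T \<delta>" "naddr \<delta> t' = u @ [i]" using assms sT_iff by blast
  then have t'T: "t' \<in> T" by (simp add: NS_def)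
  then have uS: "u \<in> strip_T T \<delta>" using sT_prefix t' by (metis prefix_order.order_refl prefixI sT_prefix)
  then have sn: "strip_node T \<delta> u \<in> NS T \<delta>" "naddr \<delta> (strip_node T \<delta> u) = u" using sT_node by auto
  obtain k where "t' = dec' \<delta> (u @ [i]) @ replicate k 0" using dec_lemma[OF t'T] t' by auto
  then have "eff \<delta> (dec' \<delta> u) @ [i] \<in> T" using t'T pref_closed by (metis dec'_snoc)
  moreover have "eff \<delta> (dec' \<delta> u) = strip_node T \<delta> u" using NS_dec[OF sn(1)] sn(2) by simp
  ultimately have c: "strip_node T \<delta> u @ [i] \<in> T" by simp
  have snT: "strip_node T \<delta> u \<in> T" "\<not> is_struct \<delta> (strip_node T \<delta> u)" using sn by (auto simp: NS_def)
  have "is_ann \<delta> (strip_node T \<delta> u)" using snT(1)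
  proof (cases rule: nc)
    case (bud c') then show ?thesis using bud_props[OF snT(1)] leaf_child c by blast
  next
    case struct then show ?thesis using snT by simp
  next
    case (ann R b bs) then show ?thesis by (simp add: is_ann_iff)
  qed
  then show ?thesis using uS c by blast
qed

lemma ann_child_sT: assumes "t \<in> NS T \<delta>" "is_ann \<delta> t" "t @ [i] \<in> T"
  shows "naddr \<delta> t @ [i] \<in> strip_T T \<delta> \<and> strip_node T \<delta> (naddr \<delta> t @ [i]) = eff \<delta> (t @ [i])"
proof -
  have "naddr \<delta> (eff \<delta> (t @ [i])) = naddr \<delta> t @ [i]" using eff_props[OF assms(3)] assms(2) by (simp add: naddr_snoc)
  then show ?thesis using eff_NS[OF assms(3)] strip_node_eq sT_iff by metis
qed

end

definition dom_b :: "('c, 'x, 'a) board \<Rightarrow> ('c, 'x, 'a) board \<Rightarrow> bool" where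
  "dom_b b' b \<longleftrightarrow> (\<forall>x a S'. S' \<in> snd b' x a \<longrightarrow> S' \<noteq> {} \<longrightarrow> (\<exists>S \<in> snd b x a. S' \<subseteq> S))"

lemma dom_refl: "dom_b b b" by (auto simp: dom_b_def)
lemma dom_trans: "dom_b b3 b2 \<Longrightarrow> dom_b b2 b1 \<Longrightarrow> dom_b b3 b1"
  unfolding dom_b_def
proof (intro allI impI)
  fix x a S' assume h3: "\<forall>x a S'. S' \<in> snd b3 x a \<longrightarrow> S' \<noteq> {} \<longrightarrow> (\<exists>S\<in>snd b2 x a. S' \<subseteq> S)"
    and h2: "\<forall>x a S'. S' \<in> snd b2 x a \<longrightarrow> S' \<noteq> {} \<longrightarrow> (\<exists>S\<in>snd b1 x a. S' \<subseteq> S)"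
    and s: "S' \<in> snd b3 x a" "S' \<noteq> {}"
  from h3 s obtain S2 where "S2 \<in> snd b2 x a" "S' \<subseteq> S2" by blast
  moreover then have "S2 \<noteq> {}" using s by auto
  ultimately obtain S1 where "S1 \<in> snd b1 x a" "S2 \<subseteq> S1" using h2 by blast
  then show "\<exists>S\<in>snd b1 x a. S' \<subseteq> S" using \<open>S' \<subseteq> S2\<close> by blast
qed

lemma dom_weak: "weak_succ b b' \<Longrightarrow> dom_b b' b"
  unfolding dom_b_def weak_succ_def by blast
lemma dom_pop: "pop_succ X b b' \<Longrightarrow> dom_b b' b"
  unfolding dom_b_def pop_succ_def by (auto split: if_splits)
lemma dom_reset: "reset_succ \<gamma> b b' \<Longrightarrow> dom_b b' b"
  unfolding dom_b_def reset_succ_def by auto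

lemma reset_contra: assumes "reset_succ \<gamma> b b'" "board_on X b" "dom_b b b'"
  shows False
proof -
  have cov: "covered b \<gamma>" and sb: "snd b' = (\<lambda>x a. (\<lambda>S. if \<gamma> \<in> S then {z\<in>S. cle (fst b) z \<gamma>} else S) ` snd b x a)"
    using assms(1) by (auto simp: reset_succ_def)
  from cov have "\<gamma> \<in> set (fst b)" by (simp add: covered_def)
  with assms(2) obtain x a S where S: "S \<in> snd b x a" "\<gamma> \<in> S" unfolding board_on_def by blast
  with assms(3) obtain S' where S': "S' \<in> snd b' x a" "S \<subseteq> S'" unfolding dom_b_def by blast
  then obtain S0 where "S0 \<in> snd b x a" "S' = (if \<gamma> \<in> S0 then {z\<in>S0. cle (fst b) z \<gamma>} else S0)"
    using sb by auto
  moreover have "\<gamma> \<in> S'" using S S' by auto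
  ultimately have "\<forall>z\<in>S'. cle (fst b) z \<gamma>" by (auto split: if_splits)
  then have "is_top (fst b) S \<gamma>" using S S' by (auto simp: is_top_def)
  then show False using cov S unfolding covered_def by blast
qed

context RP begin

lemma reset_props: assumes "t \<in> T" "\<delta> t = Some (RReset \<Gamma> \<gamma> b b')"
  shows "lab t = (\<Gamma>, b) \<and> lab (t @ [0]) = (\<Gamma>, b') \<and> reset_succ \<gamma> b b' \<and> (\<forall>i. t @ [i] \<in> T \<longleftrightarrow> i = 0)"
proof -
  have bN: "\<beta> t = None" using assms(2) PP_budd assms(1) by (cases "\<beta> t") auto
  from rule_props[OF assms(1) bN] assms(2) show ?thesis by auto
qed

lemma struct_dom: assumes "t \<in> T" "is_struct \<delta> t" shows "dom_b (snd (lab (t @ [0]))) (snd (lab t))"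
proof -
  have "weak_succ (snd (lab t)) (snd (lab (t @ [0]))) \<or> pop_succ (iobj (fst (lab t))) (snd (lab t)) (snd (lab (t @ [0]))) \<or>
     (\<exists>\<gamma>. reset_succ \<gamma> (snd (lab t)) (snd (lab (t @ [0]))))"
    using struct_props[OF assms] by blast
  then show ?thesis by (elim disjE exE) (erule dom_weak, erule dom_pop, erule dom_reset)
qed

lemma no_struct_loop: assumes tT: "t \<in> T" and bt: "\<beta> t = Some c" and tk: "t = c @ replicate k 0"
  and st: "\<forall>j<k. is_struct \<delta> (c @ replicate j 0)"
  shows False
proof -
  have bp: "leaf T t \<and> c \<in> T \<and> \<not> leaf T c \<and> strict_prefix c t \<and> lab t = lab c \<and> \<delta> t = None"
    using bud_props[OF tT bt] .
  have inT: "j \<le> k \<Longrightarrow> c @ replicate j 0 \<in> T" for j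
  proof -
    assume "j \<le> k"
    then have "t = (c @ replicate j 0) @ replicate (k - j) 0" using tk by (simp add: replicate_add[symmetric])
    then show ?thesis using tT pref_closed by blast
  qed
  have rs: "(c @ replicate j 0) @ [0] = c @ replicate (Suc j) 0" for j by (simp add: replicate_append_same[symmetric])
  define B where "B j = snd (lab (c @ replicate j 0))" for j
  have step: "j < k \<Longrightarrow> dom_b (B (Suc j)) (B j)" for j
  proof -
    assume "j < k"
    then have "dom_b (snd (lab ((c @ replicate j 0) @ [0]))) (snd (lab (c @ replicate j 0)))"
      using struct_dom[OF inT st[rule_format]] by simp
    then show ?thesis unfolding rs B_def .
  qed
  have chain: "j1 \<le> j2 \<Longrightarrow> j2 \<le> k \<Longrightarrow> dom_b (B j2) (B j1)" for j1 j2
  proof (induction j2)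
    case 0 then show ?case by (simp add: dom_refl)
  next
    case (Suc j2)
    show ?case
    proof (cases "j1 = Suc j2")
      case True then show ?thesis by (simp add: dom_refl)
    next
      case False
      then have "j1 \<le> j2" "j2 < k" using Suc.prems by auto
      then have "dom_b (B j2) (B j1)" "dom_b (B (Suc j2)) (B j2)" using Suc.IH step by auto
      then show ?thesis using dom_trans by blast
    qed
  qed
  have Bk: "B k = B 0" using bp tk by (simp add: B_def)
  have "\<exists>\<theta>. \<theta> \<noteq> [] \<and> prefix \<theta> (lcp (map (\<lambda>p. fst (snd (lab p))) (path_nodes t c))) \<and>
     (\<exists>p\<in>set (path_nodes t c). \<exists>\<Gamma> b b'. \<delta> p = Some (RReset \<Gamma> (last \<theta>) b b'))"
    using INV[OF tT] bt unfolding has_invariant_def Let_def by simp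
  then obtain \<theta> where "\<exists>p\<in>set (path_nodes t c). \<exists>\<Gamma> b b'. \<delta> p = Some (RReset \<Gamma> (last \<theta>) b b')"
    by blast
  then obtain p \<Gamma> \<gamma> b b' where p: "p \<in> set (path_nodes t c)" "\<delta> p = Some (RReset \<Gamma> \<gamma> b b')" by blast
  then obtain l where l: "length c \<le> l" "l \<le> length t" "p = take l t" by (auto simp: path_nodes_def)
  define j0 where "j0 = l - length c"
  have pj: "p = c @ replicate j0 0" using l tk by (simp add: j0_def)
  have "j0 \<noteq> k" using pj tk bp p(2) by auto
  then have j0k: "j0 < k" using l tk j0_def by auto
  have r: "lab p = (\<Gamma>, b) \<and> lab (p @ [0]) = (\<Gamma>, b') \<and> reset_succ \<gamma> b b'"
    using reset_props[OF inT[of j0] p(2)[unfolded pj]] j0k pj by auto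
  have "B j0 = b" "B (Suc j0) = b'" using r pj rs[of j0] unfolding B_def by (auto simp del: replicate.simps)
  then have rB: "reset_succ \<gamma> (B j0) (B (Suc j0))" using r by simp
  have "dom_b (B j0) (B 0)" using chain j0k by simp
  moreover have "dom_b (B k) (B (Suc j0))" using chain j0k by simp
  ultimately have d1: "dom_b (B j0) (B (Suc j0))" using Bk dom_trans[of "B j0" "B 0" "B (Suc j0)"] by simp
  have b1: "board_on (iobj (fst (lab p))) (B j0)" using lab_RSeq[OF inT[of j0]] j0k pj B_def by simp
  show False by (rule reset_contra[OF rB b1 d1])
qed

lemma eff_comp_prefix: assumes tT: "t \<in> T" and bt: "\<beta> t = Some c"
  shows "strict_prefix (eff \<delta> c) t"
proof -
  have bp: "leaf T t \<and> c \<in> T \<and> \<not> leaf T c \<and> strict_prefix c t \<and> lab t = lab c \<and> \<delta> t = None"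
    using bud_props[OF tT bt] .
  then have cT: "c \<in> T" by blast
  obtain k where k: "\<forall>j<k. is_struct \<delta> (c @ replicate j 0)" "\<not> is_struct \<delta> (c @ replicate k 0)"
    using eff_ex[OF cT] by blast
  have e: "eff \<delta> c = c @ replicate k 0" using eff_char k by blast
  have tns: "\<not> is_struct \<delta> t" using bp by (simp add: is_struct_def)
  have "j \<le> k \<Longrightarrow> prefix (c @ replicate j 0) t" for j
  proof (induction j)
    case 0 then show ?case using bp by (simp add: strict_prefix_def)
  next
    case (Suc j)
    then have pj: "prefix (c @ replicate j 0) t" and sj: "is_struct \<delta> (c @ replicate j 0)" using k by auto
    then have ne: "c @ replicate j 0 \<noteq> t" using tns by auto
    from pj obtain w where w: "t = (c @ replicate j 0) @ w" by (auto simp: prefix_def)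
    with ne obtain i w' where "w = i # w'" by (cases w) auto
    with w have "t = ((c @ replicate j 0) @ [i]) @ w'" by simp
    then have "(c @ replicate j 0) @ [i] \<in> T" "prefix ((c @ replicate j 0) @ [i]) t" using tT pref_closed by (blast, simp)
    moreover have "c @ replicate j 0 \<in> T" using pj tT pref_closed by (auto simp: prefix_def)
    ultimately have "i = 0" using struct_props sj by blast
    then show ?case using \<open>prefix ((c @ replicate j 0) @ [i]) t\<close> by (simp add: replicate_append_same[symmetric])
  qed
  then have "prefix (eff \<delta> c) t" using e by simp
  moreover have "eff \<delta> c \<noteq> t"
  proof
    assume "eff \<delta> c = t"
    then have "t = c @ replicate k 0" using e by simp
    then show False using no_struct_loop[OF tT bt _ k(1)] by blast
  qed
  ultimately show ?thesis by (simp add: strict_prefix_def)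
qed

lemma sbeta: assumes "strip_beta T \<beta> \<delta> u = Some c'"
  obtains t c where "u \<in> strip_T T \<delta>" "t = strip_node T \<delta> u" "t \<in> NS T \<delta>" "naddr \<delta> t = u" "\<beta> t = Some c"
    "c' = naddr \<delta> (eff \<delta> c)"
  using assms sT_node unfolding strip_beta_def by (auto split: if_splits)

lemma strip_cyclic: "cyclic_tree (strip_T T \<delta>) (strip_beta T \<beta> \<delta>)"
proof -
  have fin: "finite (strip_T T \<delta>)" unfolding strip_T_def NS_def using finT by simp
  have root: "[] \<in> strip_T T \<delta>" using sT_prefix[OF root_in] by simp
  have pc: "\<forall>t u. t @ u \<in> strip_T T \<delta> \<longrightarrow> t \<in> strip_T T \<delta>"
  proof (intro allI impI)
    fix t u assume "t @ u \<in> strip_T T \<delta>"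
    then obtain s where "s \<in> NS T \<delta>" "naddr \<delta> s = t @ u" using sT_iff by blast
    then show "t \<in> strip_T T \<delta>" using sT_prefix by (metis NS_def mem_Collect_eq prefixI)
  qed
  have bb: "leaf (strip_T T \<delta>) u \<and> c' \<in> strip_T T \<delta> \<and> \<not> leaf (strip_T T \<delta>) c' \<and> strict_prefix c' u"
    if sb: "strip_beta T \<beta> \<delta> u = Some c'" for u c'
  proof -
    obtain t c where tc: "u \<in> strip_T T \<delta>" "t = strip_node T \<delta> u" "t \<in> NS T \<delta>" "naddr \<delta> t = u" "\<beta> t = Some c"
      "c' = naddr \<delta> (eff \<delta> c)" using sbeta[OF sb] by blast
    have tT: "t \<in> T" using tc by (simp add: NS_def)
    have bp: "leaf T t \<and> c \<in> T \<and> \<not> leaf T c \<and> strict_prefix c t \<and> lab t = lab c \<and> \<delta> t = None"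
      using bud_props[OF tT tc(5)] .
    have lf: "leaf (strip_T T \<delta>) u"
    proof -
      have "u @ [i] \<notin> strip_T T \<delta>" for i
      proof
        assume "u @ [i] \<in> strip_T T \<delta>"
        then have "is_ann \<delta> t" using sT_child tc by blast
        then show False using bp by (simp add: is_ann_def)
      qed
      then show ?thesis by (auto simp: leaf_def Chld_def)
    qed
    define e where "e = eff \<delta> c"
    have eT: "e \<in> T" "e \<in> NS T \<delta>" using eff_props eff_NS bp e_def by auto
    have sp: "strict_prefix e t" using eff_comp_prefix[OF tT tc(5)] e_def by simp
    then obtain w0 where "t = e @ w0" "w0 \<noteq> []" by (auto simp: strict_prefix_def prefix_def)
    then obtain i w where tw: "t = (e @ [i]) @ w" by (cases w0) auto
    have eiT: "e @ [i] \<in> T" using tT tw pref_closed by blast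
    have ea: "is_ann \<delta> e"
    proof -
      have "\<not> leaf T e" using eiT by (auto simp: leaf_def Chld_def)
      then have "\<beta> e = None" using bud_props eT(1) by (cases "\<beta> e") auto
      show ?thesis using eT(1)
      proof (cases rule: nc)
        case (bud c) then show ?thesis using \<open>\<beta> e = None\<close> by simp
      next
        case struct then show ?thesis using eT(2) by (simp add: NS_def)
      next
        case (ann R b bs) then show ?thesis by (simp add: is_ann_iff)
      qed
    qed
    have ch: "naddr \<delta> e @ [i] \<in> strip_T T \<delta>" using ann_child_sT[OF eT(2) ea eiT] by blast
    have "prefix (naddr \<delta> (e @ [i])) (naddr \<delta> t)" using naddr_prefix tw by metis
    then have "prefix (naddr \<delta> e @ [i]) u" using ea tc(4) by (simp add: naddr_snoc)
    moreover have "strict_prefix (naddr \<delta> e) (naddr \<delta> e @ [i])" by (simp add: strict_prefix_def)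
    ultimately have "strict_prefix (naddr \<delta> e) u" using prefix_order.less_le_trans by blast
    moreover have "\<not> leaf (strip_T T \<delta>) (naddr \<delta> e)" using ch by (auto simp: leaf_def Chld_def)
    moreover have "naddr \<delta> e \<in> strip_T T \<delta>" using eT(2) sT_iff by blast
    ultimately show ?thesis using lf tc(6) e_def by simp
  qed
  have ne: "strip_T T \<delta> \<noteq> {}" using root by blast
  have bb': "\<forall>t\<in>strip_T T \<delta>. \<forall>c. strip_beta T \<beta> \<delta> t = Some c \<longrightarrow> leaf (strip_T T \<delta>) t \<and> c \<in> strip_T T \<delta> \<and> \<not> leaf (strip_T T \<delta>) c \<and> strict_prefix c t"
    using bb by blast
  show ?thesis unfolding cyclic_tree_def is_tree_def proof (intro conjI)
    show "finite (strip_T T \<delta>)" by (rule fin)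
    show "strip_T T \<delta> \<noteq> {}" by (rule ne)
    show "\<forall>t u. t @ u \<in> strip_T T \<delta> \<longrightarrow> t \<in> strip_T T \<delta>" by (rule pc)
  qed (rule bb')
qed

end

context RP begin

lemma strip_lab_NS: "t \<in> NS T \<delta> \<Longrightarrow> strip_lab T \<delta> lab (naddr \<delta> t) = fst (lab t)"
  by (simp add: strip_lab_def strip_node_eq)

lemma sT_ann: assumes "u \<in> strip_T T \<delta>" "strip_beta T \<beta> \<delta> u = None"
  shows "\<exists>R b bs. \<delta> (strip_node T \<delta> u) = Some (RAnn R b bs) \<and> strip_delta T \<delta> u = Some R"
proof -
  define t where "t = strip_node T \<delta> u"
  have t: "t \<in> NS T \<delta>" "naddr \<delta> t = u" using sT_node[OF assms(1)] t_def by auto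
  have bN: "\<beta> t = None" using assms t_def unfolding strip_beta_def by simp
  have tT: "t \<in> T" using t by (simp add: NS_def)
  show ?thesis using tT
  proof (cases rule: nc)
    case (bud c) then show ?thesis using bN by simp
  next
    case struct then show ?thesis using t by (simp add: NS_def)
  next
    case (ann R b bs) then show ?thesis using assms(1) t_def by (simp add: strip_delta_def)
  qed
qed

lemma strip_preproof: "preproof Seq Rl concl prems (strip_T T \<delta>) (strip_beta T \<beta> \<delta>) (strip_lab T \<delta> lab) (strip_delta T \<delta>)"
proof -
  have a: "\<forall>u\<in>strip_T T \<delta>. strip_lab T \<delta> lab u \<in> Seq"
  proof
    fix u assume "u \<in> strip_T T \<delta>"
    then have "strip_node T \<delta> u \<in> T" using sT_node by (auto simp: NS_def)
    then show "strip_lab T \<delta> lab u \<in> Seq" using lab_RSeq by (simp add: strip_lab_def)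
  qed
  have b: "\<forall>u\<in>strip_T T \<delta>. \<forall>c'. strip_beta T \<beta> \<delta> u = Some c' \<longrightarrow> strip_lab T \<delta> lab u = strip_lab T \<delta> lab c'"
  proof (intro ballI allI impI)
    fix u c' assume sb: "strip_beta T \<beta> \<delta> u = Some c'"
    obtain t c where tc: "u \<in> strip_T T \<delta>" "t = strip_node T \<delta> u" "t \<in> NS T \<delta>" "naddr \<delta> t = u" "\<beta> t = Some c"
      "c' = naddr \<delta> (eff \<delta> c)" using sbeta[OF sb] by blast
    have tT: "t \<in> T" using tc by (simp add: NS_def)
    have bp: "c \<in> T" "lab t = lab c" using bud_props[OF tT tc(5)] by auto
    have "strip_lab T \<delta> lab c' = fst (lab (eff \<delta> c))" using strip_lab_NS[OF eff_NS[OF bp(1)]] tc(6) by simp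
    also have "\<dots> = fst (lab c)" using eff_props[OF bp(1)] by simp
    finally show "strip_lab T \<delta> lab u = strip_lab T \<delta> lab c'" using strip_lab_NS[OF tc(3)] tc(4) bp(2) by simp
  qed
  have c: "\<forall>u\<in>strip_T T \<delta>. strip_beta T \<beta> \<delta> u \<noteq> None \<longrightarrow> strip_delta T \<delta> u = None"
  proof (intro ballI impI)
    fix u assume "u \<in> strip_T T \<delta>" "strip_beta T \<beta> \<delta> u \<noteq> None"
    then obtain c' where sb: "strip_beta T \<beta> \<delta> u = Some c'" by blast
    obtain t c where tc: "u \<in> strip_T T \<delta>" "t = strip_node T \<delta> u" "t \<in> NS T \<delta>" "naddr \<delta> t = u" "\<beta> t = Some c"
      "c' = naddr \<delta> (eff \<delta> c)" using sbeta[OF sb] by blast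
    have tT: "t \<in> T" using tc by (simp add: NS_def)
    have "\<delta> t = None" using bud_props[OF tT tc(5)] by simp
    then show "strip_delta T \<delta> u = None" using tc by (simp add: strip_delta_def)
  qed
  have d: "\<forall>u\<in>strip_T T \<delta>. strip_beta T \<beta> \<delta> u = None \<longrightarrow>
        (case strip_delta T \<delta> u of
           None \<Rightarrow> leaf (strip_T T \<delta>) u
         | Some R \<Rightarrow> R \<in> Rl \<and> concl R = strip_lab T \<delta> lab u \<and>
              Chld (strip_T T \<delta>) u = {u @ [i] | i. i < length (prems R)} \<and>
              (\<forall>i < length (prems R). strip_lab T \<delta> lab (u @ [i]) = prems R ! i))"
  proof (intro ballI impI)
    fix u assume u: "u \<in> strip_T T \<delta>" "strip_beta T \<beta> \<delta> u = None"
    then obtain R b bs where rb: "\<delta> (strip_node T \<delta> u) = Some (RAnn R b bs)" "strip_delta T \<delta> u = Some R"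
      using sT_ann by blast
    define t where "t = strip_node T \<delta> u"
    have t: "t \<in> NS T \<delta>" "naddr \<delta> t = u" using sT_node[OF u(1)] t_def by auto
    have tT: "t \<in> T" using t by (simp add: NS_def)
    have ap: "R \<in> Rl" "lab t = (concl R, b)" "\<forall>i. t @ [i] \<in> T \<longleftrightarrow> i < length (prems R)"
      "\<forall>i < length (prems R). lab (t @ [i]) = (prems R ! i, bs ! i)"
      using ann_props[OF tT rb(1)[folded t_def]] by auto
    have ta: "is_ann \<delta> t" using rb(1) t_def by (simp add: is_ann_iff)
    have ch: "u @ [i] \<in> strip_T T \<delta> \<longleftrightarrow> i < length (prems R)" for i
    proof
      assume "u @ [i] \<in> strip_T T \<delta>"
      then have "t @ [i] \<in> T" using sT_child t_def by blast
      then show "i < length (prems R)" using ap by blast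
    next
      assume "i < length (prems R)"
      then have "t @ [i] \<in> T" using ap by blast
      then show "u @ [i] \<in> strip_T T \<delta>" using ann_child_sT[OF t(1) ta] t(2) by blast
    qed
    have chl: "Chld (strip_T T \<delta>) u = {u @ [i] | i. i < length (prems R)}"
      unfolding Chld_def using ch by blast
    have labs: "strip_lab T \<delta> lab (u @ [i]) = prems R ! i" if "i < length (prems R)" for i
    proof -
      have iT: "t @ [i] \<in> T" using ap that by blast
      have "strip_node T \<delta> (u @ [i]) = eff \<delta> (t @ [i])" using ann_child_sT[OF t(1) ta iT] t(2) by simp
      then have "strip_lab T \<delta> lab (u @ [i]) = fst (lab (t @ [i]))" using eff_props[OF iT] by (simp add: strip_lab_def)
      then show ?thesis using ap that by simp
    qed
    have "concl R = strip_lab T \<delta> lab u" using strip_lab_NS[OF t(1)] t(2) ap by simp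
    then show "case strip_delta T \<delta> u of
           None \<Rightarrow> leaf (strip_T T \<delta>) u
         | Some R \<Rightarrow> R \<in> Rl \<and> concl R = strip_lab T \<delta> lab u \<and>
              Chld (strip_T T \<delta>) u = {u @ [i] | i. i < length (prems R)} \<and>
              (\<forall>i < length (prems R). strip_lab T \<delta> lab (u @ [i]) = prems R ! i)"
      using rb(2) ap(1) chl labs by simp
  qed
  show ?thesis unfolding preproof_def
  proof (intro conjI)
    show "cyclic_tree (strip_T T \<delta>) (strip_beta T \<beta> \<delta>)" by (rule strip_cyclic)
  qed (rule a, rule b, rule c, rule d)
qed

lemma strip_af: "assumption_free (strip_T T \<delta>) (strip_beta T \<beta> \<delta>) (strip_delta T \<delta>)"
  unfolding assumption_free_def using sT_ann by blast

lemma strip_root: "strip_lab T \<delta> lab [] = fst (lab [])"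
proof -
  have "naddr \<delta> (eff \<delta> []) = []" using eff_props[OF root_in] by simp
  then show ?thesis using strip_lab_NS[OF eff_NS[OF root_in]] eff_props[OF root_in] by simp
qed

end

lemma lcp2_prefix: "prefix (lcp2 a b) a \<and> prefix (lcp2 a b) b"
  by (induction a b rule: lcp2.induct) auto

lemma fold_lcp_prefix: "prefix (fold (\<lambda>m acc. lcp2 acc m) ls a) a \<and> (\<forall>m\<in>set ls. prefix (fold (\<lambda>m acc. lcp2 acc m) ls a) m)"
proof (induction ls arbitrary: a)
  case Nil then show ?case by simp
next
  case (Cons x xs)
  have "prefix (lcp2 a x) a" "prefix (lcp2 a x) x" using lcp2_prefix by blast+
  with Cons.IH[of "lcp2 a x"] show ?case by (auto intro: prefix_order.order_trans)
qed

lemma lcp_prefix: assumes "l \<in> set ls" shows "prefix (lcp ls) l"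
proof (cases ls)
  case Nil then show ?thesis using assms by simp
next
  case (Cons a xs) then show ?thesis using assms fold_lcp_prefix[of xs a] by auto
qed

lemma path_nodes_mem: "length c \<le> k \<Longrightarrow> k \<le> length t \<Longrightarrow> take k t \<in> set (path_nodes t c)"
  by (auto simp: path_nodes_def)

lemma take_prefix_eq: "prefix a x \<Longrightarrow> k \<le> length a \<Longrightarrow> take k x = take k a"
  by (auto simp: prefix_def)

lemma prefix_take_len: "prefix u t \<Longrightarrow> take (length u) t = u"
  by (auto simp: prefix_def)

lemma prefix_in_path: "prefix c u \<Longrightarrow> prefix u t \<Longrightarrow> u \<in> set (path_nodes t c)"
  using path_nodes_mem[of c "length u" t] prefix_take_len[of u t] prefix_length_le by metis

lemma infinite_Suc_image: "infinite A \<Longrightarrow> infinite (Suc ` A)"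
  using finite_imageD inj_Suc by blast

context RP begin

abbreviation ctrl where "ctrl u \<equiv> fst (snd (lab u))"

lemma inv_of_bud: assumes "t \<in> T" "\<beta> t = Some c"
  shows "\<exists>\<theta>. \<theta> \<noteq> [] \<and> (\<forall>q\<in>set (path_nodes t c). prefix \<theta> (ctrl q)) \<and>
     (\<exists>p\<in>set (path_nodes t c). \<exists>\<Gamma> b b'. \<delta> p = Some (RReset \<Gamma> (last \<theta>) b b'))"
proof -
  have "\<exists>\<theta>. \<theta> \<noteq> [] \<and> prefix \<theta> (lcp (map (\<lambda>p. fst (snd (lab p))) (path_nodes t c))) \<and>
     (\<exists>p\<in>set (path_nodes t c). \<exists>\<Gamma> b b'. \<delta> p = Some (RReset \<Gamma> (last \<theta>) b b'))"
    using INV[OF assms(1)] assms(2) unfolding has_invariant_def Let_def by simp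
  then obtain \<theta> where th: "\<theta> \<noteq> []" "prefix \<theta> (lcp (map (\<lambda>p. fst (snd (lab p))) (path_nodes t c)))"
     "\<exists>p\<in>set (path_nodes t c). \<exists>\<Gamma> b b'. \<delta> p = Some (RReset \<Gamma> (last \<theta>) b b')" by blast
  have "\<forall>q\<in>set (path_nodes t c). prefix \<theta> (ctrl q)"
  proof
    fix q assume "q \<in> set (path_nodes t c)"
    then have "prefix (lcp (map (\<lambda>p. fst (snd (lab p))) (path_nodes t c))) (ctrl q)"
      by (intro lcp_prefix) simp
    then show "prefix \<theta> (ctrl q)" using th(2) by (rule prefix_order.order_trans[rotated])
  qed
  then show ?thesis using th by blast
qed

lemma comb:
  fixes ob :: "nat \<Rightarrow> nat list"
  assumes oT: "\<And>n. ob n \<in> T"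
    and ost: "\<And>n. \<beta> (ob n) = Some (ob (Suc n)) \<or> (\<beta> (ob n) = None \<and> (\<exists>j. ob (Suc n) = ob n @ [j]))"
  shows "\<exists>\<gamma> n1. (\<forall>n\<ge>n1. \<gamma> \<in> set (ctrl (ob n))) \<and> (\<forall>K. \<exists>r\<ge>K. \<exists>\<Gamma> b b'. \<delta> (ob r) = Some (RReset \<Gamma> \<gamma> b b'))"
proof -
  define N where "N = {u. infinite {n. ob n = u}}"
  have NT: "N \<subseteq> T"
  proof
    fix u assume "u \<in> N"
    then have "{n. ob n = u} \<noteq> {}" unfolding N_def by (intro notI) simp
    then obtain n where "ob n = u" by blast
    then show "u \<in> T" using oT by blast
  qed
  define F where "F = (\<Union>u\<in>T - N. {n. ob n = u})"
  have "finite F" unfolding F_def N_def using finT by auto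
  then obtain n1a where n1a: "\<forall>n\<in>F. n < n1a" using finite_nat_set_iff_bounded by blast
  have late: "n \<ge> n1a \<Longrightarrow> ob n \<in> N" for n
  proof (rule ccontr)
    assume "n1a \<le> n" "ob n \<notin> N"
    then have "n \<in> F" using oT unfolding F_def by blast
    then show False using n1a \<open>n1a \<le> n\<close> by auto
  qed
  have infv: "u \<in> N \<Longrightarrow> \<exists>n\<ge>K. ob n = u" for u K
    unfolding N_def using infinite_nat_iff_unbounded_le by auto
  have jumpN: "t \<in> N \<Longrightarrow> \<beta> t = Some c \<Longrightarrow> c \<in> N" for t c
  proof -
    assume tN: "t \<in> N" and bt: "\<beta> t = Some c"
    have "Suc ` {n. ob n = t} \<subseteq> {n. ob n = c}"
      using ost bt by (auto, metis option.inject option.simps(3))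
    then show "c \<in> N" using tN unfolding N_def using infinite_Suc_image infinite_super by blast
  qed
  have "ob n1a \<in> N" using late by simp
  define l0 where "l0 = (LEAST l. \<exists>u\<in>N. length u = l)"
  have "\<exists>u\<in>N. length u = l0" unfolding l0_def
    by (rule LeastI_ex) (use \<open>ob n1a \<in> N\<close> in blast)
  then obtain c0 where c0: "c0 \<in> N" "length c0 = l0" by blast
  have c0min: "u \<in> N \<Longrightarrow> length c0 \<le> length u" for u
    unfolding c0(2) l0_def by (rule Least_le) blast
  obtain nc where nc: "nc \<ge> n1a" "ob nc = c0" using infv[OF c0(1)] by blast
  have below: "m \<ge> nc \<Longrightarrow> prefix c0 (ob m)" for m
  proof (induction m rule: dec_induct)
    case base then show ?case using nc by simp
  next
    case (step m)
    show ?case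
    proof (cases "\<beta> (ob m)")
      case None
      then obtain j where "ob (Suc m) = ob m @ [j]" using ost by (metis option.distinct(1))
      then show ?thesis using step.IH by (simp add: prefix_order.order_trans)
    next
      case (Some c)
      then have c: "ob (Suc m) = c" using ost[of m] by auto
      have sp: "strict_prefix c (ob m)" using bud_props[OF oT Some] by blast
      have "c \<in> N" using late step.hyps nc c by (metis le_SucI order.trans)
      then have "length c0 \<le> length c" using c0min by blast
      then show ?thesis using prefix_length_prefix[OF step.IH] sp c by (simp add: strict_prefix_def)
    qed
  qed
  have Nbelow: "u \<in> N \<Longrightarrow> prefix c0 u" for u using infv[of u nc] below by auto
  have key: "\<exists>t c. t \<in> N \<and> \<beta> t = Some c \<and> strict_prefix c u \<and> prefix u t" if uN: "u \<in> N" and ne: "u \<noteq> c0" for u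
  proof -
    obtain n where n: "n \<ge> nc" "ob n = u" using infv[OF uN] by blast
    obtain m' where m': "m' \<ge> n" "ob m' = c0" using infv[OF c0(1)] by blast
    have "strict_prefix c0 u" using Nbelow[OF uN] ne by (simp add: strict_prefix_def)
    then have np: "\<not> prefix u (ob m')" using m' by (auto simp: strict_prefix_def dest: prefix_order.antisym)
    have "\<exists>m. n \<le> m \<and> \<not> prefix u (ob m)" using m' np by blast
    from exists_least_iff[THEN iffD1, OF this] obtain m0 where m0: "n \<le> m0 \<and> \<not> prefix u (ob m0)"
      "\<forall>m<m0. \<not> (n \<le> m \<and> \<not> prefix u (ob m))" by blast
    have "m0 \<noteq> n" using m0 n by auto
    then have "n < m0" using m0 by simp
    then obtain m1 where m1: "m0 = Suc m1" "n \<le> m1" by (cases m0) auto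
    have pm1: "prefix u (ob m1)" using m0(2) m1 by auto
    have npm0: "\<not> prefix u (ob m0)" using m0 by simp
    show ?thesis
    proof (cases "\<beta> (ob m1)")
      case None
      then obtain j where "ob (Suc m1) = ob m1 @ [j]" using ost by (metis option.distinct(1))
      then show ?thesis using pm1 npm0 m1 by (simp add: prefix_order.order_trans)
    next
      case (Some c)
      then have c: "ob m0 = c" using ost[of m1] m1 by auto
      have sp: "strict_prefix c (ob m1)" using bud_props[OF oT Some] by blast
      have "prefix c u \<or> prefix u c" using prefix_same_cases[OF pm1] sp by (auto simp: strict_prefix_def)
      then have "strict_prefix c u" using npm0 c by (auto simp: strict_prefix_def)
      moreover have "ob m1 \<in> N" using late m1 n nc by simp
      ultimately show ?thesis using Some pm1 by blast
    qed
  qed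
  define BN where "BN = {t\<in>N. \<beta> t \<noteq> None}"
  have "BN \<noteq> {}"
  proof -
    obtain n where n: "n \<ge> nc" "ob n = c0" using infv[OF c0(1)] by blast
    have "ob (Suc n) \<in> N" using late n nc by simp
    have "ob (Suc n) \<noteq> c0"
    proof
      assume h: "ob (Suc n) = c0"
      show False
      proof (cases "\<beta> (ob n)")
        case None then obtain j where "ob (Suc n) = ob n @ [j]" using ost by (metis option.distinct(1))
        then show False using h n by simp
      next
        case (Some c) then have "ob (Suc n) = c" using ost[of n] by auto
        then show False using bud_props[OF oT Some] h n by (simp add: strict_prefix_def)
      qed
    qed
    then show ?thesis using key \<open>ob (Suc n) \<in> N\<close> BN_def by blast
  qed
  define th where "th t = (SOME \<theta>. \<theta> \<noteq> [] \<and> (\<forall>q\<in>set (path_nodes t (the (\<beta> t))). prefix \<theta> (ctrl q)) \<and>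
     (\<exists>p\<in>set (path_nodes t (the (\<beta> t))). \<exists>\<Gamma> b b'. \<delta> p = Some (RReset \<Gamma> (last \<theta>) b b')))" for t
  have thP: "th t \<noteq> [] \<and> (\<forall>q\<in>set (path_nodes t (the (\<beta> t))). prefix (th t) (ctrl q)) \<and>
     (\<exists>p\<in>set (path_nodes t (the (\<beta> t))). \<exists>\<Gamma> b b'. \<delta> p = Some (RReset \<Gamma> (last (th t)) b b'))" if "t \<in> BN" for t
  proof -
    from that have tN: "t \<in> N" "\<beta> t \<noteq> None" by (simp_all add: BN_def)
    then obtain c where bc: "\<beta> t = Some c" by blast
    have tT: "t \<in> T" using tN NT by blast
    have ex: "\<exists>\<theta>. \<theta> \<noteq> [] \<and> (\<forall>q\<in>set (path_nodes t (the (\<beta> t))). prefix \<theta> (ctrl q)) \<and>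
     (\<exists>p\<in>set (path_nodes t (the (\<beta> t))). \<exists>\<Gamma> b b'. \<delta> p = Some (RReset \<Gamma> (last \<theta>) b b'))"
      using inv_of_bud[OF tT bc] bc by simp
    show ?thesis unfolding th_def by (rule someI_ex[OF ex])
  qed
  have "BN \<subseteq> T" using NT BN_def by auto
  then have finBN: "finite BN" using finT finite_subset by blast
  obtain t0 where "t0 \<in> BN" using \<open>BN \<noteq> {}\<close> by blast
  from ex_has_least_nat[of "\<lambda>t. t \<in> BN" t0 "\<lambda>t. length (th t)", OF this]
  obtain ts where ts: "ts \<in> BN" "\<forall>t\<in>BN. length (th ts) \<le> length (th t)" by blast
  define mm where "mm = length (th ts)"
  have claim: "\<forall>u. u \<in> N \<longrightarrow> take mm (ctrl u) = take mm (ctrl c0)"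
  proof (intro allI)
    fix u show "u \<in> N \<longrightarrow> take mm (ctrl u) = take mm (ctrl c0)"
    proof (induction "length u" arbitrary: u rule: less_induct)
      case less
      show ?case
      proof (intro impI)
        assume uN: "u \<in> N"
        show "take mm (ctrl u) = take mm (ctrl c0)"
        proof (cases "u = c0")
          case True then show ?thesis by simp
        next
          case False
          then obtain t c where tc: "t \<in> N" "\<beta> t = Some c" "strict_prefix c u" "prefix u t" using key uN by blast
          have tB: "t \<in> BN" using tc BN_def by simp
          have cN: "c \<in> N" using jumpN tc by blast
          have lc: "length c < length u" using tc(3) prefix_length_less by blast
          have IHc: "take mm (ctrl c) = take mm (ctrl c0)" using less lc cN by blast
          have ct: "prefix c t" using tc(3,4) by (auto simp: strict_prefix_def intro: prefix_order.order_trans)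
          have "u \<in> set (path_nodes t c)" using prefix_in_path tc(3,4) by (simp add: strict_prefix_def)
          moreover have "c \<in> set (path_nodes t c)" using prefix_in_path ct by simp
          ultimately have "prefix (th t) (ctrl u)" "prefix (th t) (ctrl c)" using thP[OF tB] tc(2) by auto
          moreover have "mm \<le> length (th t)" using ts tB mm_def by blast
          ultimately have "take mm (ctrl u) = take mm (ctrl c)"
            using take_prefix_eq by metis
          then show ?thesis using IHc by simp
        qed
      qed
    qed
  qed
  obtain cs where cs: "\<beta> ts = Some cs" using ts BN_def by auto
  have tsT: "ts \<in> T" using ts NT BN_def by auto
  have csN: "cs \<in> N" using jumpN ts cs BN_def by blast
  have thts: "th ts \<noteq> []" "\<forall>q\<in>set (path_nodes ts cs). prefix (th ts) (ctrl q)"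
    "\<exists>p\<in>set (path_nodes ts cs). \<exists>\<Gamma> b b'. \<delta> p = Some (RReset \<Gamma> (last (th ts)) b b')"
    using thP[OF ts(1)] cs by auto
  have cscs: "cs \<in> set (path_nodes ts cs)"
    using bud_props[OF tsT cs] prefix_in_path[of cs cs ts] by (simp add: strict_prefix_def)
  have "prefix (th ts) (ctrl cs)" using thts cscs by blast
  then have "th ts = take mm (ctrl cs)" using prefix_take_len mm_def by metis
  then have thc: "th ts = take mm (ctrl c0)" using claim csN by simp
  define \<gamma> where "\<gamma> = last (th ts)"
  have gmem: "\<gamma> \<in> set (ctrl u)" if "u \<in> N" for u
  proof -
    have "\<gamma> \<in> set (take mm (ctrl u))" using claim that thc thts(1) \<gamma>_def by simp
    then show ?thesis using in_set_takeD by fast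
  qed
  obtain p \<Gamma> b b' where p: "p \<in> set (path_nodes ts cs)" "\<delta> p = Some (RReset \<Gamma> \<gamma> b b')"
    using thts(3) \<gamma>_def by blast
  have visit: "\<forall>q. prefix c0 q \<and> prefix q (ob n) \<longrightarrow> (\<exists>n'. v \<le> n' \<and> n' \<le> n \<and> ob n' = q)"
    if "v \<ge> nc" "ob v = c0" "n \<ge> v" for v n
    using that(3)
  proof (induction n rule: dec_induct)
    case base then show ?case using that(2) prefix_order.antisym by blast
  next
    case (step m)
    show ?case
    proof (intro allI impI)
      fix q assume q: "prefix c0 q \<and> prefix q (ob (Suc m))"
      show "\<exists>n'. v \<le> n' \<and> n' \<le> Suc m \<and> ob n' = q"
      proof (cases "\<beta> (ob m)")
        case None
        then obtain j where j: "ob (Suc m) = ob m @ [j]" using ost by (metis option.distinct(1))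
        then have "q = ob (Suc m) \<or> prefix q (ob m)" using q by (simp add: prefix_snoc)
        then show ?thesis using step.IH q step.hyps by (metis le_SucI order.trans le_refl le_Suc_eq)
      next
        case (Some c)
        then have "ob (Suc m) = c" using ost[of m] by auto
        then have "prefix q (ob m)" using q bud_props[OF oT Some] by (auto simp: strict_prefix_def intro: prefix_order.order_trans)
        then show ?thesis using step.IH q by (meson le_SucI)
      qed
    qed
  qed
  have pvis: "\<exists>r\<ge>K. ob r = p" for K
  proof -
    obtain v where v: "v \<ge> max K nc" "ob v = c0" using infv[OF c0(1)] by blast
    obtain n where n: "n \<ge> v" "ob n = ts" using infv[of ts v] ts BN_def by auto
    obtain k where k: "length cs \<le> k" "k \<le> length ts" "p = take k ts" using p(1) by (auto simp: path_nodes_def)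
    have "prefix cs p" using k bud_props[OF tsT cs]
      by (metis prefix_def strict_prefix_def take_append append_take_drop_id take_all order_refl
          prefix_length_le le_add_diff_inverse append_eq_conv_conj)
    then have "prefix c0 p" using Nbelow[OF csN] prefix_order.order_trans by blast
    moreover have "prefix p (ob n)" using k n by (simp add: take_is_prefix)
    ultimately obtain n' where "v \<le> n'" "ob n' = p" using visit[of v n] v n by auto
    then show ?thesis using v by (intro exI[of _ n']) auto
  qed
  have "\<forall>n\<ge>n1a. \<gamma> \<in> set (ctrl (ob n))" using gmem late by blast
  moreover have "\<forall>K. \<exists>r\<ge>K. \<exists>\<Gamma> b b'. \<delta> (ob r) = Some (RReset \<Gamma> \<gamma> b b')" using pvis p(2) by blast
  ultimately show ?thesis by blast
qed

end

lemma decr_inter: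
  fixes A :: "nat \<Rightarrow> 'b set"
  assumes fin: "finite S" and sub: "\<And>m. A m \<subseteq> S" and dec: "\<And>m. A (Suc m) \<subseteq> A m" and ne: "\<And>m. A m \<noteq> {}"
  shows "\<exists>x. \<forall>m. x \<in> A m"
proof (rule ccontr)
  assume "\<not> ?thesis"
  then have "\<forall>x. \<exists>m. x \<notin> A m" by blast
  then obtain mf where mf: "\<And>x. x \<notin> A (mf x)" by metis
  define M where "M = Max (mf ` S)"
  obtain x where x: "x \<in> A M" using ne by blast
  then have "x \<in> S" using sub by blast
  then have "mf x \<le> M" unfolding M_def using fin by simp
  then have "A M \<subseteq> A (mf x)" using lift_Suc_antimono_le[of A, OF dec] by blast
  then show False using x mf by blast
qed

lemma koenig:
  fixes G :: "nat \<Rightarrow> 'b set" and R :: "nat \<Rightarrow> 'b \<Rightarrow> 'b \<Rightarrow> bool"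
  assumes fin: "\<And>n. n \<ge> n0 \<Longrightarrow> finite (G n)" and ne: "\<And>n. n \<ge> n0 \<Longrightarrow> G n \<noteq> {}"
    and pred: "\<And>n y. n \<ge> n0 \<Longrightarrow> y \<in> G (Suc n) \<Longrightarrow> \<exists>x\<in>G n. R n x y"
  shows "\<exists>f. \<forall>n\<ge>n0. f n \<in> G n \<and> R n (f n) (f (Suc n))"
proof -
  define reach where "reach n x m \<longleftrightarrow> (\<exists>g. g n = x \<and> (\<forall>k. n \<le> k \<and> k \<le> m \<longrightarrow> g k \<in> G k) \<and>
      (\<forall>k. n \<le> k \<and> k < m \<longrightarrow> R k (g k) (g (Suc k))))" for n x m
  have bk: "\<exists>g. g (n + d) = y \<and> (\<forall>k. n \<le> k \<and> k \<le> n + d \<longrightarrow> g k \<in> G k) \<and>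
      (\<forall>k. n \<le> k \<and> k < n + d \<longrightarrow> R k (g k) (g (Suc k)))" if n0: "n \<ge> n0" and yG: "y \<in> G (n + d)" for n d y
    using yG
  proof (induction d arbitrary: y)
    case 0 then show ?case by (intro exI[of _ "\<lambda>_. y"]) auto
  next
    case (Suc d)
    obtain x where x: "x \<in> G (n + d)" "R (n + d) x y" using pred[of "n + d" y] Suc.prems n0 by force
    obtain g where g: "g (n + d) = x" "\<forall>k. n \<le> k \<and> k \<le> n + d \<longrightarrow> g k \<in> G k"
      "\<forall>k. n \<le> k \<and> k < n + d \<longrightarrow> R k (g k) (g (Suc k))" using Suc.IH[OF x(1)] by blast
    define g' where "g' = g(Suc (n + d) := y)"
    have "g' (n + Suc d) = y" by (simp add: g'_def)
    moreover have "\<forall>k. n \<le> k \<and> k \<le> n + Suc d \<longrightarrow> g' k \<in> G k"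
      using g(2) Suc.prems by (auto simp: g'_def le_Suc_eq)
    moreover have "\<forall>k. n \<le> k \<and> k < n + Suc d \<longrightarrow> R k (g' k) (g' (Suc k))"
    proof (intro allI impI)
      fix k assume k: "n \<le> k \<and> k < n + Suc d"
      show "R k (g' k) (g' (Suc k))"
      proof (cases "k = n + d")
        case True then show ?thesis using x g(1) by (simp add: g'_def)
      next
        case False then show ?thesis using g(3) k by (simp add: g'_def)
      qed
    qed
    ultimately show ?case by blast
  qed
  have rmono: "reach n x (Suc m) \<Longrightarrow> reach n x m" for n x m
    unfolding reach_def
  proof (elim exE conjE)
    fix g assume "g n = x" "\<forall>k. n \<le> k \<and> k \<le> Suc m \<longrightarrow> g k \<in> G k"
       "\<forall>k. n \<le> k \<and> k < Suc m \<longrightarrow> R k (g k) (g (Suc k))"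
    then show "\<exists>g. g n = x \<and> (\<forall>k. n \<le> k \<and> k \<le> m \<longrightarrow> g k \<in> G k) \<and>
      (\<forall>k. n \<le> k \<and> k < m \<longrightarrow> R k (g k) (g (Suc k)))" by (intro exI[of _ g]) auto
  qed
  define good where "good n x \<longleftrightarrow> x \<in> G n \<and> (\<forall>d. reach n x (n + d))" for n x
  have good0: "\<exists>x. good n0 x"
  proof -
    define A where "A d = {x \<in> G n0. reach n0 x (n0 + d)}" for d
    have "\<exists>x. \<forall>d. x \<in> A d"
    proof (rule decr_inter[of "G n0"])
      show "finite (G n0)" using fin by simp
      show "A d \<subseteq> G n0" for d by (auto simp: A_def)
      show "A (Suc d) \<subseteq> A d" for d using rmono by (auto simp: A_def)
      show "A d \<noteq> {}" for d
      proof -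
        obtain y where "y \<in> G (n0 + d)" using ne by fastforce
        then obtain g where g: "g (n0 + d) = y" "\<forall>k. n0 \<le> k \<and> k \<le> n0 + d \<longrightarrow> g k \<in> G k"
          "\<forall>k. n0 \<le> k \<and> k < n0 + d \<longrightarrow> R k (g k) (g (Suc k))" using bk[of n0 y d] by auto
        then have "g n0 \<in> A d" unfolding A_def reach_def by auto
        then show ?thesis by blast
      qed
    qed
    then show ?thesis unfolding good_def A_def by blast
  qed
  have gstep: "\<exists>y. R n x y \<and> good (Suc n) y" if "n \<ge> n0" "good n x" for n x
  proof -
    define B where "B d = {y \<in> G (Suc n). R n x y \<and> reach (Suc n) y (Suc n + d)}" for d
    have "\<exists>y. \<forall>d. y \<in> B d"
    proof (rule decr_inter[of "G (Suc n)"])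
      show "finite (G (Suc n))" using fin that by simp
      show "B d \<subseteq> G (Suc n)" for d by (auto simp: B_def)
      show "B (Suc d) \<subseteq> B d" for d using rmono by (auto simp: B_def)
      show "B d \<noteq> {}" for d
      proof -
        have "reach n x (n + Suc (Suc d))" using that(2) good_def by blast
        then obtain g where g: "g n = x" "\<forall>k. n \<le> k \<and> k \<le> n + Suc (Suc d) \<longrightarrow> g k \<in> G k"
          "\<forall>k. n \<le> k \<and> k < n + Suc (Suc d) \<longrightarrow> R k (g k) (g (Suc k))" unfolding reach_def by blast
        have "g (Suc n) \<in> B d" unfolding B_def reach_def
        proof (intro CollectI conjI exI[of _ g])
          show "g (Suc n) \<in> G (Suc n)" using g(2) by simp
          show "R n x (g (Suc n))" using g(1,3) by auto
          show "g (Suc n) = g (Suc n)" by simp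
          show "\<forall>k. Suc n \<le> k \<and> k \<le> Suc n + d \<longrightarrow> g k \<in> G k" using g(2) by auto
          show "\<forall>k. Suc n \<le> k \<and> k < Suc n + d \<longrightarrow> R k (g k) (g (Suc k))" using g(3) by auto
        qed
        then show ?thesis by blast
      qed
    qed
    then obtain y where "\<forall>d. y \<in> B d" by blast
    then have "R n x y" "good (Suc n) y" unfolding good_def B_def using B_def by auto
    then show ?thesis by blast
  qed
  obtain x0 where x0: "good n0 x0" using good0 by blast
  define h where "h = rec_nat x0 (\<lambda>k x. SOME y. R (n0 + k) x y \<and> good (Suc (n0 + k)) y)"
  have h0: "h 0 = x0" by (simp add: h_def)
  have hS: "h (Suc k) = (SOME y. R (n0 + k) (h k) y \<and> good (Suc (n0 + k)) y)" for k by (simp add: h_def)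
  have hgood: "good (n0 + k) (h k) \<and> R (n0 + k) (h k) (h (Suc k))" for k
  proof (induction k)
    case 0
    have "R (n0 + 0) (h 0) (h (Suc 0)) \<and> good (Suc (n0 + 0)) (h (Suc 0))"
      unfolding hS by (rule someI_ex) (use gstep x0 h0 in auto)
    then show ?case using x0 h0 by simp
  next
    case (Suc k)
    then have g: "good (n0 + Suc k) (h (Suc k))"
      using someI_ex[OF gstep[of "n0 + k" "h k"]] hS by (simp add: Suc.IH)
    have "R (n0 + Suc k) (h (Suc k)) (h (Suc (Suc k))) \<and> good (Suc (n0 + Suc k)) (h (Suc (Suc k)))"
      unfolding hS[of "Suc k"] by (rule someI_ex) (use gstep[of "n0 + Suc k"] g in auto)
    then show ?case using g by simp
  qed
  define f where "f n = h (n - n0)" for n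
  have "\<forall>n\<ge>n0. f n \<in> G n \<and> R n (f n) (f (Suc n))"
  proof (intro allI impI)
    fix n assume "n0 \<le> n"
    then obtain k where k: "n = n0 + k" by (metis le_add_diff_inverse)
    then have "f n = h k" "f (Suc n) = h (Suc k)" by (simp_all add: f_def)
    then show "f n \<in> G n \<and> R n (f n) (f (Suc n))" using hgood[of k] k good_def by simp
  qed
  then show ?thesis by blast
qed

lemma cle_iff: "cle \<Theta> z \<gamma> \<longleftrightarrow> (\<exists>us vs. \<Theta> = us @ \<gamma> # vs \<and> z \<in> set (us @ [\<gamma>]))"
proof
  assume "cle \<Theta> z \<gamma>"
  then obtain i j where ij: "i \<le> j" "j < length \<Theta>" "\<Theta> ! i = z" "\<Theta> ! j = \<gamma>" by (auto simp: cle_def)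
  have "\<Theta> = take j \<Theta> @ \<gamma> # drop (Suc j) \<Theta>" using ij id_take_nth_drop[of j \<Theta>] by simp
  moreover have "z \<in> set (take j \<Theta> @ [\<gamma>])"
  proof (cases "i = j")
    case True then show ?thesis using ij by simp
  next
    case False then have "i < j" using ij by simp
    then have "take j \<Theta> ! i = z" using ij by simp
    then show ?thesis using \<open>i < j\<close> ij by (metis in_set_conv_nth length_take min.absorb2 less_imp_le_nat Un_iff set_append)
  qed
  ultimately show "\<exists>us vs. \<Theta> = us @ \<gamma> # vs \<and> z \<in> set (us @ [\<gamma>])" by blast
next
  assume "\<exists>us vs. \<Theta> = us @ \<gamma> # vs \<and> z \<in> set (us @ [\<gamma>])"
  then obtain us vs where uv: "\<Theta> = us @ \<gamma> # vs" "z \<in> set (us @ [\<gamma>])" by blast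
  then obtain i where i: "i < length (us @ [\<gamma>])" "(us @ [\<gamma>]) ! i = z" by (metis in_set_conv_nth)
  have "i \<le> length us" "length us < length \<Theta>" "\<Theta> ! length us = \<gamma>" using i uv by auto
  moreover have "\<Theta> ! i = z" using i uv by (auto simp: nth_append split: if_splits)
  ultimately show "cle \<Theta> z \<gamma>" unfolding cle_def by blast
qed

lemma cle_mem: "cle \<Theta> z \<gamma> \<Longrightarrow> z \<in> set \<Theta>"
  by (auto simp: cle_def)

lemma cle_pres:
  assumes "\<Theta>' = filter P \<Theta> @ new" "set new \<inter> set \<Theta> = {}" "cle \<Theta> z \<gamma>" "z \<in> set \<Theta>'" "\<gamma> \<in> set \<Theta>'"
  shows "cle \<Theta>' z \<gamma>"
proof -
  obtain us vs where uv: "\<Theta> = us @ \<gamma> # vs" "z \<in> set (us @ [\<gamma>])" using assms(3) cle_iff by metis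
  have gnew: "\<gamma> \<notin> set new" "z \<notin> set new" using assms(2) uv by auto
  then have "P \<gamma>" "P z" using assms(1,4,5) by auto
  then have "\<Theta>' = filter P us @ \<gamma> # (filter P vs @ new)" "z \<in> set (filter P us @ [\<gamma>])"
    using assms(1) uv by auto
  then show ?thesis using cle_iff by metis
qed

lemma board_pos: "board_on X b \<Longrightarrow> S \<in> snd b x a \<Longrightarrow> x \<in> X \<and> S \<subseteq> set (fst b)"
  unfolding board_on_def by blast

lemma board_occ: "board_on X b \<Longrightarrow> \<gamma> \<in> set (fst b) \<Longrightarrow> \<exists>x a S. S \<in> snd b x a \<and> \<gamma> \<in> S"
  unfolding board_on_def by blast

lemma pred_mor:
  fixes \<alpha> :: "'a::bounded_semilattice_sup_bot" and r :: "('x \<times> 'a \<times> 'x) set"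
    and b b' :: "('c, 'x, 'a) board"
  assumes ms: "mor_succ \<alpha> r b b'" and S': "S' \<in> snd b' y a'" "\<gamma> \<in> S'" and g: "\<gamma> \<in> set (fst b)"
  shows "\<exists>x a S c. S \<in> snd b x a \<and> \<gamma> \<in> S \<and> (x, c, y) \<in> r \<and>
     ((a' = sup a c \<and> S' = S) \<or> (sup a c = \<alpha> \<and> a' = bot \<and> (\<exists>z. S' = insert z S)))"
proof -
  obtain fresh :: "'x \<Rightarrow> 'c" and new where
    m: "let \<sigma>s = moved r (snd b); Y\<alpha> = {y. \<sigma>s y \<alpha> \<noteq> {}} in
       inj_on fresh Y\<alpha> \<and> (\<forall>y\<in>Y\<alpha>. fresh y \<notin> set (fst b)) \<and>
       distinct new \<and> set new = fresh ` Y\<alpha> \<and>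
       snd b' = (\<lambda>y a. if y \<in> Y\<alpha> then
                          (if a = \<alpha> then {}
                           else if a = bot then \<sigma>s y bot \<union> insert (fresh y) ` \<sigma>s y \<alpha>
                           else \<sigma>s y a)
                        else \<sigma>s y a) \<and>
       fst b' = filter (\<lambda>z. z \<in> occ (snd b')) (fst b) @ new"
    using ms unfolding mor_succ_def by blast
  define \<sigma>s where "\<sigma>s = moved r (snd b)"
  define Y\<alpha> where "Y\<alpha> = {y. \<sigma>s y \<alpha> \<noteq> {}}"
  have fr: "\<forall>y\<in>Y\<alpha>. fresh y \<notin> set (fst b)" and sb: "snd b' = (\<lambda>y a. if y \<in> Y\<alpha> then
                          (if a = \<alpha> then {}
                           else if a = bot then \<sigma>s y bot \<union> insert (fresh y) ` \<sigma>s y \<alpha>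
                           else \<sigma>s y a)
                        else \<sigma>s y a)"
    using m unfolding Let_def \<sigma>s_def[symmetric] Y\<alpha>_def[symmetric] by auto
  have mv: "S \<in> \<sigma>s y a \<Longrightarrow> \<exists>x b0 c. S \<in> snd b x b0 \<and> (x, c, y) \<in> r \<and> a = sup b0 c" for S a
    unfolding \<sigma>s_def moved_def by blast
  have plain: "S' \<in> \<sigma>s y a' \<Longrightarrow> ?thesis"
  proof -
    assume "S' \<in> \<sigma>s y a'"
    then obtain x b0 c where "S' \<in> snd b x b0" "(x, c, y) \<in> r" "a' = sup b0 c" using mv by blast
    then show ?thesis using S'(2) by blast
  qed
  show ?thesis
  proof (cases "y \<in> Y\<alpha>")
    case False then show ?thesis using S' sb plain by simp
  next
    case True
    show ?thesis
    proof (cases "a' = \<alpha>")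
      case True then show ?thesis using S' sb \<open>y \<in> Y\<alpha>\<close> by simp
    next
      case na: False
      show ?thesis
      proof (cases "a' = bot")
        case False then show ?thesis using S' sb \<open>y \<in> Y\<alpha>\<close> na plain by simp
      next
        case ab: True
        then have "S' \<in> \<sigma>s y bot \<or> S' \<in> insert (fresh y) ` \<sigma>s y \<alpha>" using S' sb \<open>y \<in> Y\<alpha>\<close> na by simp
        then show ?thesis
        proof
          assume "S' \<in> \<sigma>s y bot" then show ?thesis using plain ab by simp
        next
          assume "S' \<in> insert (fresh y) ` \<sigma>s y \<alpha>"
          then obtain S where S: "S \<in> \<sigma>s y \<alpha>" "S' = insert (fresh y) S" by blast
          then obtain x b0 c where xb: "S \<in> snd b x b0" "(x, c, y) \<in> r" "\<alpha> = sup b0 c" using mv by blast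
          have "fresh y \<noteq> \<gamma>" using fr \<open>y \<in> Y\<alpha>\<close> g by blast
          then have "\<gamma> \<in> S" using S S'(2) by simp
          then show ?thesis using xb S ab by metis
        qed
      qed
    qed
  qed
qed

lemma ctrl_mor:
  fixes \<alpha> :: "'a::{sup,bot}" and r :: "('x \<times> 'a \<times> 'x) set"
    and b b' :: "('c, 'x, 'a) board"
  assumes "mor_succ \<alpha> r b b'"
  shows "\<exists>P new. fst b' = filter P (fst b) @ new \<and> set new \<inter> set (fst b) = {}"
proof -
  obtain fresh :: "'x \<Rightarrow> 'c" and new where
    m: "let \<sigma>s = moved r (snd b); Y\<alpha> = {y. \<sigma>s y \<alpha> \<noteq> {}} in
       inj_on fresh Y\<alpha> \<and> (\<forall>y\<in>Y\<alpha>. fresh y \<notin> set (fst b)) \<and>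
       distinct new \<and> set new = fresh ` Y\<alpha> \<and>
       snd b' = (\<lambda>y a. if y \<in> Y\<alpha> then
                          (if a = \<alpha> then {}
                           else if a = bot then \<sigma>s y bot \<union> insert (fresh y) ` \<sigma>s y \<alpha>
                           else \<sigma>s y a)
                        else \<sigma>s y a) \<and>
       fst b' = filter (\<lambda>z. z \<in> occ (snd b')) (fst b) @ new"
    using assms unfolding mor_succ_def by blast
  then have "fst b' = filter (\<lambda>z. z \<in> occ (snd b')) (fst b) @ new" "set new \<inter> set (fst b) = {}"
    unfolding Let_def by auto
  then show ?thesis by blast
qed

lemma ctrl_weak: "weak_succ b b' \<Longrightarrow> \<exists>P new. fst b' = filter P (fst b) @ new \<and> set new \<inter> set (fst b) = {}"
  unfolding weak_succ_def by (intro exI[of _ "\<lambda>z. z \<in> occ (snd b')"] exI[of _ "[]"]) auto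
lemma ctrl_pop: "pop_succ X b b' \<Longrightarrow> \<exists>P new. fst b' = filter P (fst b) @ new \<and> set new \<inter> set (fst b) = {}"
  unfolding pop_succ_def by (intro exI[of _ "\<lambda>z. z \<in> occ (snd b')"] exI[of _ "[]"]) auto
lemma ctrl_reset: "reset_succ \<gamma> b b' \<Longrightarrow> \<exists>P new. fst b' = filter P (fst b) @ new \<and> set new \<inter> set (fst b) = {}"
  unfolding reset_succ_def by (intro exI[of _ "\<lambda>z. z \<in> occ (snd b')"] exI[of _ "[]"]) auto

lemma pred_weak: "weak_succ b b' \<Longrightarrow> S' \<in> snd b' x a \<Longrightarrow> \<exists>S. S \<in> snd b x a \<and> S' \<subseteq> S"
  unfolding weak_succ_def by blast
lemma pred_pop: "pop_succ X b b' \<Longrightarrow> S' \<in> snd b' x a \<Longrightarrow> S' \<noteq> {} \<Longrightarrow> \<exists>S. S \<in> snd b x a \<and> S' \<subseteq> S"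
  unfolding pop_succ_def by (auto split: if_splits)
lemma pred_reset: "reset_succ \<gamma>' b b' \<Longrightarrow> S' \<in> snd b' x a \<Longrightarrow> \<exists>S. S \<in> snd b x a \<and> S' \<subseteq> S"
  unfolding reset_succ_def by auto

lemma reset_trunc: assumes "reset_succ \<gamma> b b'" "S' \<in> snd b' x a" "\<gamma> \<in> S'"
  shows "\<forall>z\<in>S'. cle (fst b) z \<gamma>"
proof -
  have sb: "snd b' = (\<lambda>x a. (\<lambda>S. if \<gamma> \<in> S then {z\<in>S. cle (fst b) z \<gamma>} else S) ` snd b x a)"
    using assms(1) by (simp add: reset_succ_def)
  then obtain S0 where "S0 \<in> snd b x a" "S' = (if \<gamma> \<in> S0 then {z\<in>S0. cle (fst b) z \<gamma>} else S0)"
    using assms(2) by auto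
  then show ?thesis using assms(3) by (auto split: if_splits)
qed

lemma covered_nontop: assumes "reset_succ \<gamma> b b'" "S \<in> snd b x a" "\<gamma> \<in> S"
  shows "\<exists>z\<in>S. \<not> cle (fst b) z \<gamma>"
  using assms unfolding reset_succ_def covered_def is_top_def by blast

primrec obr :: "(nat list \<Rightarrow> nat list option) \<Rightarrow> (nat list \<Rightarrow> ('s, 'c, 'x, 'a, 'r) rrule option) \<Rightarrow> (nat \<Rightarrow> nat list) \<Rightarrow> nat \<Rightarrow> nat list \<times> nat" where
  "obr \<beta> \<delta> \<pi> 0 = ([], 0)"
| "obr \<beta> \<delta> \<pi> (Suc n) = (let p = obr \<beta> \<delta> \<pi> n in
     if \<beta> (fst p) \<noteq> None then (the (\<beta> (fst p)), Suc (snd p))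
     else if is_struct \<delta> (fst p) then (fst p @ [0], snd p)
     else (fst p @ [last (\<pi> (Suc (snd p)))], Suc (snd p)))"

locale RPB = RP \<alpha> Seq Rl concl prems iobj imor T \<beta> lab \<delta>
  for \<alpha> :: "'a::{finite, bounded_semilattice_sup_bot}"
    and Seq :: "'s set" and Rl :: "'r set"
    and concl :: "'r \<Rightarrow> 's" and prems :: "'r \<Rightarrow> 's list"
    and iobj :: "'s \<Rightarrow> 'x set" and imor :: "'r \<Rightarrow> ('x \<times> 'a \<times> 'x) set list"
    and T :: "nat list set" and \<beta> :: "nat list \<Rightarrow> nat list option"
    and lab :: "nat list \<Rightarrow> 's \<times> ('c, 'x, 'a) board"
    and \<delta> :: "nat list \<Rightarrow> ('s, 'c, 'x, 'a, 'r) rrule option" +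
  fixes \<pi> :: "nat \<Rightarrow> nat list"
  assumes br: "branch (strip_T T \<delta>) (strip_beta T \<beta> \<delta>) \<pi>"
begin

abbreviation ob where "ob n \<equiv> fst (obr \<beta> \<delta> \<pi> n)"
abbreviation ix where "ix n \<equiv> snd (obr \<beta> \<delta> \<pi> n)"
abbreviation \<tau> where "\<tau> \<equiv> branch_mor (strip_T T \<delta>) (strip_lab T \<delta> lab) (strip_delta T \<delta>) iobj imor \<pi>"
abbreviation XX where "XX i \<equiv> iobj (strip_lab T \<delta> lab (\<pi> i))"

lemma br0: "\<pi> 0 = []" using br by (simp add: branch_def)
lemma brS: "\<pi> i \<in> strip_T T \<delta> \<and> (if leaf (strip_T T \<delta>) (\<pi> i) then strip_beta T \<beta> \<delta> (\<pi> i) = Some (\<pi> (Suc i))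
                        else \<pi> (Suc i) \<in> Chld (strip_T T \<delta>) (\<pi> i))"
  using br unfolding branch_def by blast

lemma obr_Suc_bud: "\<beta> (ob n) = Some c \<Longrightarrow> ob (Suc n) = c \<and> ix (Suc n) = Suc (ix n)"
  by (simp add: Let_def)
lemma obr_Suc_struct: "\<beta> (ob n) = None \<Longrightarrow> is_struct \<delta> (ob n) \<Longrightarrow> ob (Suc n) = ob n @ [0] \<and> ix (Suc n) = ix n"
  by (simp add: Let_def)
lemma obr_Suc_ann: "\<beta> (ob n) = None \<Longrightarrow> \<not> is_struct \<delta> (ob n) \<Longrightarrow>
    ob (Suc n) = ob n @ [last (\<pi> (Suc (ix n)))] \<and> ix (Suc n) = Suc (ix n)"
  by (simp add: Let_def)

lemma leaf_of_bud: assumes "t \<in> NS T \<delta>" "\<beta> t = Some c" shows "leaf (strip_T T \<delta>) (naddr \<delta> t)"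
proof -
  have "naddr \<delta> t \<in> strip_T T \<delta>" using assms sT_iff by blast
  then have "strip_beta T \<beta> \<delta> (naddr \<delta> t) = Some (naddr \<delta> (eff \<delta> c))"
    using strip_node_eq[OF assms(1)] assms(2) by (simp add: strip_beta_def)
  then show ?thesis using strip_cyclic \<open>naddr \<delta> t \<in> strip_T T \<delta>\<close> unfolding cyclic_tree_def by blast
qed

lemma lift_inv: "ob n \<in> T \<and> naddr \<delta> (eff \<delta> (ob n)) = \<pi> (ix n)"
proof (induction n)
  case 0 then show ?case using root_in eff_props[OF root_in] br0 by simp
next
  case (Suc n)
  have oT: "ob n \<in> T" and iv: "naddr \<delta> (eff \<delta> (ob n)) = \<pi> (ix n)" using Suc.IH by auto
  show ?case using oT
  proof (cases rule: nc)
    case (bud c)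
    have ns: "ob n \<in> NS T \<delta>" using oT bud by (simp add: NS_def is_struct_def)
    then have e: "eff \<delta> (ob n) = ob n" using eff_nonstruct by (simp add: NS_def)
    have lf: "leaf (strip_T T \<delta>) (\<pi> (ix n))" using leaf_of_bud[OF ns bud(1)] iv e by simp
    have "strip_beta T \<beta> \<delta> (\<pi> (ix n)) = Some (naddr \<delta> (eff \<delta> c))"
      using strip_node_eq[OF ns] bud(1) iv e sT_iff ns by (simp add: strip_beta_def) blast
    then have "\<pi> (Suc (ix n)) = naddr \<delta> (eff \<delta> c)" using brS[of "ix n"] lf by simp
    moreover have "c \<in> T" using bud_props[OF oT bud(1)] by blast
    ultimately show ?thesis using obr_Suc_bud[OF bud(1)] by simp
  next
    case struct
    then show ?thesis using obr_Suc_struct[OF struct(2,1)] eff_struct[OF oT struct(1)] struct_props[OF oT struct(1)] iv by simp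
  next
    case (ann R b bs)
    have nst: "\<not> is_struct \<delta> (ob n)" using ann by (simp add: is_struct_def is_ann_def)
    have ns: "ob n \<in> NS T \<delta>" using oT nst by (simp add: NS_def)
    have e: "eff \<delta> (ob n) = ob n" using eff_nonstruct nst by simp
    have pi: "\<pi> (ix n) = naddr \<delta> (ob n)" using iv e by simp
    have sn: "strip_node T \<delta> (\<pi> (ix n)) = ob n" using strip_node_eq[OF ns] pi by simp
    have sbN: "strip_beta T \<beta> \<delta> (\<pi> (ix n)) = None" using sn ann(2) by (simp add: strip_beta_def)
    have nl: "\<not> leaf (strip_T T \<delta>) (\<pi> (ix n))" using brS[of "ix n"] sbN by auto
    then have "\<pi> (Suc (ix n)) \<in> Chld (strip_T T \<delta>) (\<pi> (ix n))" using brS[of "ix n"] by simp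
    then obtain j where j: "\<pi> (Suc (ix n)) = \<pi> (ix n) @ [j]" "\<pi> (ix n) @ [j] \<in> strip_T T \<delta>" by (auto simp: Chld_def)
    have jT: "ob n @ [j] \<in> T" using sT_child[OF j(2)] sn by simp
    have os: "ob (Suc n) = ob n @ [j]" "ix (Suc n) = Suc (ix n)" using obr_Suc_ann[OF ann(2) nst] j by auto
    have "naddr \<delta> (eff \<delta> (ob n @ [j])) = naddr \<delta> (ob n) @ [j]"
      using eff_props[OF jT] ann by (simp add: naddr_snoc is_ann_iff)
    then show ?thesis using os jT j pi by simp
  qed
qed

lemma ob_T: "ob n \<in> T" using lift_inv by blast

lemma XX_ob: "iobj (fst (lab (ob n))) = XX (ix n)"
proof -
  have "\<pi> (ix n) = naddr \<delta> (eff \<delta> (ob n))" using lift_inv by simp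
  then have "strip_lab T \<delta> lab (\<pi> (ix n)) = fst (lab (eff \<delta> (ob n)))" using strip_lab_NS eff_NS[OF ob_T] by simp
  then show ?thesis using eff_props[OF ob_T] by simp
qed

lemma step_bud: assumes "\<beta> (ob n) = Some c"
  shows "ob (Suc n) = c \<and> ix (Suc n) = Suc (ix n) \<and> \<tau> (ix n) = mid (iobj (fst (lab (ob n)))) \<and> lab (ob (Suc n)) = lab (ob n)"
proof -
  have oT: "ob n \<in> T" by (rule ob_T)
  have ns: "ob n \<in> NS T \<delta>" using oT bud_props[OF oT assms] by (simp add: NS_def is_struct_def)
  then have e: "eff \<delta> (ob n) = ob n" using eff_nonstruct by (simp add: NS_def)
  have pi: "\<pi> (ix n) = naddr \<delta> (ob n)" using lift_inv e by metis
  have lf: "leaf (strip_T T \<delta>) (\<pi> (ix n))" using leaf_of_bud[OF ns assms] pi by simp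
  have "\<tau> (ix n) = mid (XX (ix n))" using lf by (simp add: branch_mor_def)
  then show ?thesis using obr_Suc_bud[OF assms] XX_ob[of n] bud_props[OF oT assms] by simp
qed

lemma step_struct: assumes "is_struct \<delta> (ob n)"
  shows "ob (Suc n) = ob n @ [0] \<and> ix (Suc n) = ix n"
proof -
  have "\<beta> (ob n) = None" using struct_props[OF ob_T assms] by blast
  then show ?thesis using obr_Suc_struct assms by blast
qed

lemma step_ann: assumes "\<delta> (ob n) = Some (RAnn R b bs)"
  shows "\<exists>j<length (prems R). ob (Suc n) = ob n @ [j] \<and> ix (Suc n) = Suc (ix n) \<and> \<tau> (ix n) = imor R ! j"
proof -
  have oT: "ob n \<in> T" by (rule ob_T)
  have ap: "\<beta> (ob n) = None" "\<forall>i. ob n @ [i] \<in> T \<longleftrightarrow> i < length (prems R)" using ann_props[OF oT assms] by auto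
  have nst: "\<not> is_struct \<delta> (ob n)" using assms by (simp add: is_struct_def is_ann_def)
  have ns: "ob n \<in> NS T \<delta>" using oT nst by (simp add: NS_def)
  have e: "eff \<delta> (ob n) = ob n" using eff_nonstruct nst by simp
  have pi: "\<pi> (ix n) = naddr \<delta> (ob n)" using lift_inv e by metis
  have sn: "strip_node T \<delta> (\<pi> (ix n)) = ob n" using strip_node_eq[OF ns] pi by simp
  have sbN: "strip_beta T \<beta> \<delta> (\<pi> (ix n)) = None" using sn ap(1) by (simp add: strip_beta_def)
  have nl: "\<not> leaf (strip_T T \<delta>) (\<pi> (ix n))" using brS[of "ix n"] sbN by auto
  then have "\<pi> (Suc (ix n)) \<in> Chld (strip_T T \<delta>) (\<pi> (ix n))" using brS[of "ix n"] by simp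
  then obtain j where j: "\<pi> (Suc (ix n)) = \<pi> (ix n) @ [j]" "\<pi> (ix n) @ [j] \<in> strip_T T \<delta>" by (auto simp: Chld_def)
  have jT: "ob n @ [j] \<in> T" using sT_child[OF j(2)] sn by simp
  then have jl: "j < length (prems R)" using ap by blast
  have os: "ob (Suc n) = ob n @ [j]" "ix (Suc n) = Suc (ix n)" using obr_Suc_ann[OF ap(1) nst] j by auto
  have sd: "strip_delta T \<delta> (\<pi> (ix n)) = Some R" using sn assms brS[of "ix n"] by (simp add: strip_delta_def)
  have "\<tau> (ix n) = imor R ! j" using nl sd j by (simp add: branch_mor_def)
  then show ?thesis using os jl by blast
qed

lemma ost: "\<beta> (ob n) = Some (ob (Suc n)) \<or> (\<beta> (ob n) = None \<and> (\<exists>j. ob (Suc n) = ob n @ [j]))"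
  using ob_T[of n]
proof (cases rule: nc)
  case (bud c) then show ?thesis using step_bud by simp
next
  case struct then show ?thesis using step_struct by blast
next
  case (ann R b bs) then show ?thesis using step_ann by blast
qed

end

lemma mcomp_mem: "(x, a, y) \<in> R \<Longrightarrow> (y, b, z) \<in> R' \<Longrightarrow> (x, sup a b, z) \<in> mcomp R' R"
  by (auto simp: mcomp_def)

lemma latt1: fixes \<alpha> a c v :: "'a::bounded_semilattice_sup_bot"
  shows "v = a \<or> v = sup \<alpha> a \<Longrightarrow> sup v c = sup a c \<or> sup v c = sup \<alpha> (sup a c)"
  by (auto simp: sup_assoc)

lemma latt2: fixes \<alpha> a c v :: "'a::bounded_semilattice_sup_bot"
  assumes "v = a \<or> v = sup \<alpha> a" "sup a c = \<alpha>" shows "sup v c = \<alpha>"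
proof (cases "v = a")
  case True then show ?thesis using assms by simp
next
  case False
  then have "v = sup \<alpha> a" using assms by blast
  then have "sup v c = sup \<alpha> (sup a c)" by (simp add: sup_assoc)
  also have "\<dots> = \<alpha>" using assms(2) by simp
  finally show ?thesis .
qed

declare obr.simps(2)[simp del]

context RPB begin

abbreviation bd where "bd n \<equiv> snd (lab (ob n))"

definition LS :: "nat \<Rightarrow> 'x \<times> 'a \<times> 'c set \<Rightarrow> 'x \<times> 'a \<times> 'c set \<Rightarrow> bool" where
  "LS n s s' \<longleftrightarrow> (case s of (x, a, S) \<Rightarrow> case s' of (x', a', S') \<Rightarrow>
     (if is_ann \<delta> (ob n) then (\<exists>c. (x, c, x') \<in> \<tau> (ix n) \<and>
          ((a' = sup a c \<and> S' = S) \<or> (sup a c = \<alpha> \<and> a' = bot \<and> (\<exists>z. S' = insert z S))))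
      else (x' = x \<and> a' = a \<and> S' \<subseteq> S)))"

lemma board_ob: "board_on (iobj (fst (lab (ob n)))) (bd n)"
  using lab_RSeq[OF ob_T] by blast

lemma fin_iobj: "finite (iobj (fst (lab (ob n))))"
  using TI lab_RSeq[OF ob_T[of n]] unfolding trace_interp_def by blast

lemma ctrl_step: "\<exists>P new. ctrl (ob (Suc n)) = filter P (ctrl (ob n)) @ new \<and> set new \<inter> set (ctrl (ob n)) = {}"
proof (cases rule: nc[OF ob_T[of n], case_names bud struct ann])
  case (bud c)
  then have "lab (ob (Suc n)) = lab (ob n)" using step_bud by blast
  then show ?thesis by (intro exI[of _ "\<lambda>_. True"] exI[of _ "[]"]) simp
next
  case struct
  have o: "ob (Suc n) = ob n @ [0]" using step_struct[OF struct(1)] by blast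
  have "weak_succ (bd n) (snd (lab (ob n @ [0]))) \<or> pop_succ (iobj (fst (lab (ob n)))) (bd n) (snd (lab (ob n @ [0]))) \<or>
     (\<exists>\<gamma>. reset_succ \<gamma> (bd n) (snd (lab (ob n @ [0]))))"
    using struct_props[OF ob_T struct(1)] by blast
  then show ?thesis unfolding o by (elim disjE exE) (erule ctrl_weak, erule ctrl_pop, erule ctrl_reset)
next
  case (ann R b bs)
  obtain j where j: "j < length (prems R)" "ob (Suc n) = ob n @ [j]" using step_ann[OF ann(1)] by blast
  have "lab (ob n) = (concl R, b)" "lab (ob n @ [j]) = (prems R ! j, bs ! j)" "mor_succ \<alpha> (imor R ! j) b (bs ! j)"
    using ann_props[OF ob_T ann(1)] j by auto
  then show ?thesis using ctrl_mor[of \<alpha> "imor R ! j" b "bs ! j"] j by simp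
qed

lemma ix_Suc: "ix n \<le> ix (Suc n)"
proof (cases rule: nc[OF ob_T[of n], case_names bud struct ann])
  case (bud c) then show ?thesis using step_bud by simp
next
  case struct then show ?thesis using step_struct by simp
next
  case (ann R b bs) then show ?thesis using step_ann by fastforce
qed

lemma ix_mono: "m \<le> n \<Longrightarrow> ix m \<le> ix n"
  using ix_Suc by (rule lift_Suc_mono_le)

lemma pred_step: assumes g: "\<gamma> \<in> set (ctrl (ob n))" and y: "S' \<in> snd (bd (Suc n)) x' a'" "\<gamma> \<in> S'"
  shows "\<exists>x a S. S \<in> snd (bd n) x a \<and> \<gamma> \<in> S \<and> LS n (x, a, S) (x', a', S')"
proof (cases rule: nc[OF ob_T[of n], case_names bud struct ann])
  case (bud c)
  then have "lab (ob (Suc n)) = lab (ob n)" using step_bud by blast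
  moreover have "\<not> is_ann \<delta> (ob n)" using bud by (simp add: is_ann_def)
  ultimately show ?thesis using y unfolding LS_def by auto
next
  case struct
  have o: "ob (Suc n) = ob n @ [0]" using step_struct[OF struct(1)] by blast
  have na: "\<not> is_ann \<delta> (ob n)" using struct by (simp add: is_struct_def)
  have "weak_succ (bd n) (snd (lab (ob n @ [0]))) \<or> pop_succ (iobj (fst (lab (ob n)))) (bd n) (snd (lab (ob n @ [0]))) \<or>
     (\<exists>\<gamma>. reset_succ \<gamma> (bd n) (snd (lab (ob n @ [0]))))"
    using struct_props[OF ob_T struct(1)] by blast
  moreover have "S' \<noteq> {}" using y by auto
  ultimately have "\<exists>S. S \<in> snd (bd n) x' a' \<and> S' \<subseteq> S"
    using y o by (elim disjE exE) (auto dest: pred_weak pred_pop pred_reset)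
  then obtain S where "S \<in> snd (bd n) x' a'" "S' \<subseteq> S" by blast
  then show ?thesis using y na unfolding LS_def by (intro exI[of _ x'] exI[of _ a'] exI[of _ S]) auto
next
  case (ann R b bs)
  obtain j where j: "j < length (prems R)" "ob (Suc n) = ob n @ [j]" "\<tau> (ix n) = imor R ! j"
    using step_ann[OF ann(1)] by blast
  have l: "lab (ob n) = (concl R, b)" "lab (ob n @ [j]) = (prems R ! j, bs ! j)" "mor_succ \<alpha> (imor R ! j) b (bs ! j)"
    using ann_props[OF ob_T ann(1)] j by auto
  have ia: "is_ann \<delta> (ob n)" using ann by (simp add: is_ann_iff)
  have sb: "S' \<in> snd (bs ! j) x' a'" using y j l by simp
  have gb: "\<gamma> \<in> set (fst b)" using g l(1) by simp
  obtain x a S c where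
    "S \<in> snd b x a" "\<gamma> \<in> S" "(x, c, x') \<in> imor R ! j"
    "(a' = sup a c \<and> S' = S) \<or> (sup a c = \<alpha> \<and> a' = bot \<and> (\<exists>z. S' = insert z S))"
    using pred_mor[OF l(3) sb y(2) gb] by blast
  then show ?thesis using l j ia unfolding LS_def by (intro exI[of _ x] exI[of _ a] exI[of _ S]) auto
qed

lemma lineage:
  assumes g: "\<forall>n\<ge>n1. \<gamma> \<in> set (ctrl (ob n))"
  shows "\<exists>f. \<forall>n\<ge>n1. f n \<in> {(x, a, S). S \<in> snd (bd n) x a \<and> \<gamma> \<in> S} \<and> LS n (f n) (f (Suc n))"
proof (rule koenig)
  fix n assume n: "n1 \<le> n"
  have "{(x, a, S). S \<in> snd (bd n) x a \<and> \<gamma> \<in> S} \<subseteq> iobj (fst (lab (ob n))) \<times> UNIV \<times> Pow (set (ctrl (ob n)))"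
    using board_pos[OF board_ob] by fastforce
  moreover have "finite (iobj (fst (lab (ob n))) \<times> (UNIV :: 'a set) \<times> Pow (set (ctrl (ob n))))"
    using fin_iobj by simp
  ultimately show "finite {(x, a, S). S \<in> snd (bd n) x a \<and> \<gamma> \<in> S}" using finite_subset by blast
  show "{(x, a, S). S \<in> snd (bd n) x a \<and> \<gamma> \<in> S} \<noteq> {}"
    using board_occ[OF board_ob] g n by fastforce
next
  fix n y assume n: "n1 \<le> n" and "y \<in> {(x, a, S). S \<in> snd (bd (Suc n)) x a \<and> \<gamma> \<in> S}"
  then obtain x' a' S' where "y = (x', a', S')" "S' \<in> snd (bd (Suc n)) x' a'" "\<gamma> \<in> S'" by blast
  then show "\<exists>x\<in>{(x, a, S). S \<in> snd (bd n) x a \<and> \<gamma> \<in> S}. LS n x y"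
    using pred_step[of \<gamma> n S' x' a'] g n by fastforce
qed

lemma ann_ix: "is_ann \<delta> (ob n) \<Longrightarrow> ix (Suc n) = Suc (ix n)"
  using step_ann unfolding is_ann_iff by blast

lemma trace: "trace_cond \<alpha> (\<lambda>i. iobj (strip_lab T \<delta> lab (\<pi> i))) \<tau>"
proof -
  obtain \<gamma> n1 where g: "\<forall>n\<ge>n1. \<gamma> \<in> set (ctrl (ob n))"
    and rs: "\<forall>K. \<exists>r\<ge>K. \<exists>\<Gamma> b b'. \<delta> (ob r) = Some (RReset \<Gamma> \<gamma> b b')"
    using comb[of "\<lambda>n. ob n", OF ob_T ost] by blast
  obtain f where f: "\<forall>n\<ge>n1. f n \<in> {(x, a, S). S \<in> snd (bd n) x a \<and> \<gamma> \<in> S} \<and> LS n (f n) (f (Suc n))"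
    using lineage[OF g] by blast
  define xs where "xs n = fst (f n)" for n
  define as where "as n = fst (snd (f n))" for n
  define Ss where "Ss n = snd (snd (f n))" for n
  have fn: "f n = (xs n, as n, Ss n)" for n by (simp add: xs_def as_def Ss_def)
  have inS: "Ss n \<in> snd (bd n) (xs n) (as n)" "\<gamma> \<in> Ss n" if "n \<ge> n1" for n using f that fn[of n] by auto
  have ls: "LS n (xs n, as n, Ss n) (xs (Suc n), as (Suc n), Ss (Suc n))" if "n \<ge> n1" for n
    using f that fn by metis
  have xsX: "xs n \<in> iobj (fst (lab (ob n)))" if "n \<ge> n1" for n using board_pos[OF board_ob inS(1)[OF that]] by blast
  define ev where "ev e \<longleftrightarrow> e \<ge> n1 \<and> is_ann \<delta> (ob e) \<and> (\<exists>c. (xs e, c, xs (Suc e)) \<in> \<tau> (ix e) \<and> sup (as e) c = \<alpha> \<and> as (Suc e) = bot)" for e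
  have nonev: "Ss (Suc n) \<subseteq> Ss n" if n1n: "n \<ge> n1" and nev: "\<not> ev n" for n
  proof (cases "is_ann \<delta> (ob n)")
    case True
    then obtain c where c: "(xs n, c, xs (Suc n)) \<in> \<tau> (ix n)"
      "(as (Suc n) = sup (as n) c \<and> Ss (Suc n) = Ss n) \<or> (sup (as n) c = \<alpha> \<and> as (Suc n) = bot \<and> (\<exists>z. Ss (Suc n) = insert z (Ss n)))"
      using ls[OF n1n] unfolding LS_def by auto
    then show ?thesis using n1n nev True unfolding ev_def by auto
  next
    case False then show ?thesis using ls[OF n1n] unfolding LS_def by auto
  qed
  have evinf: "\<exists>e\<ge>K. ev e" for K
  proof -
    obtain r \<Gamma> b b' where r: "r \<ge> max K n1" "\<delta> (ob r) = Some (RReset \<Gamma> \<gamma> b b')" using rs by blast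
    obtain r' \<Gamma>2 b2 b2' where r': "r' \<ge> Suc r" "\<delta> (ob r') = Some (RReset \<Gamma>2 \<gamma> b2 b2')" using rs by blast
    show ?thesis
    proof (rule ccontr)
      assume ne: "\<not> ?thesis"
      have rp: "lab (ob r) = (\<Gamma>, b)" "lab (ob r @ [0]) = (\<Gamma>, b')" "reset_succ \<gamma> b b'"
        using reset_props[OF ob_T r(2)] by auto
      have sr: "is_struct \<delta> (ob r)" using r(2) by (simp add: is_struct_def is_ann_def)
      have "ob (Suc r) = ob r @ [0]" using step_struct[OF sr] by blast
      then have "bd (Suc r) = b'" using rp by simp
      then have T1: "\<forall>z\<in>Ss (Suc r). cle (ctrl (ob r)) z \<gamma>"
        using reset_trunc[OF rp(3)] inS[of "Suc r"] r(1) rp(1) by simp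
      have dec: "Ss k \<subseteq> Ss k0" if "Suc r \<le> k0" "k0 \<le> k" "k \<le> r'" for k0 k
        using that(2,3)
      proof (induction k rule: dec_induct)
        case base then show ?case by simp
      next
        case (step k)
        have "\<not> ev k" using ne step.hyps that(1) r(1) by auto
        then have "Ss (Suc k) \<subseteq> Ss k" using nonev step.hyps that(1) r(1) by auto
        then show ?case using step by auto
      qed
      have rp': "lab (ob r') = (\<Gamma>2, b2)" "reset_succ \<gamma> b2 b2'" using reset_props[OF ob_T r'(2)] by auto
      obtain z where z: "z \<in> Ss r'" "\<not> cle (ctrl (ob r')) z \<gamma>"
        using covered_nontop[OF rp'(2), of "Ss r'"] inS[of r'] r r' rp'(1) by auto
      have zk: "z \<in> Ss k" if "Suc r \<le> k" "k \<le> r'" for k using dec[OF that(1) that(2) order_refl] z(1) that dec by blast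
      have "cle (ctrl (ob k)) z \<gamma>" if "r \<le> k" "k \<le> r'" for k
        using that
      proof (induction k rule: dec_induct)
        case base
        have "z \<in> Ss (Suc r)" using zk r' by simp
        then show ?case using T1 by blast
      next
        case (step k)
        obtain P new where pn: "ctrl (ob (Suc k)) = filter P (ctrl (ob k)) @ new" "set new \<inter> set (ctrl (ob k)) = {}"
          using ctrl_step by blast
        have k1: "Suc k \<ge> n1" "Suc r \<le> Suc k" "Suc k \<le> r'" using step r(1) by auto
        have "z \<in> set (ctrl (ob (Suc k)))" using board_pos[OF board_ob inS(1)[OF k1(1)]] zk[OF k1(2,3)] by blast
        moreover have "\<gamma> \<in> set (ctrl (ob (Suc k)))" using g k1 by blast
        ultimately show ?case using cle_pres[OF pn] step by simp
      qed
      then show False using z r' by simp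
    qed
  qed
  have segl: "\<exists>v. (xs m, v, xs n) \<in> seg \<tau> (XX (ix m)) (ix m) (ix n - ix m) \<and> (v = as n \<or> v = sup \<alpha> (as n))"
    if m: "m \<ge> n1" "as m = bot" and mn: "m \<le> n" for m n
    using mn
  proof (induction n rule: dec_induct)
    case base
    have "xs m \<in> XX (ix m)" using xsX[OF m(1)] XX_ob by simp
    then show ?case using m by (intro exI[of _ bot]) (simp add: mid_def)
  next
    case (step n)
    then obtain v where v: "(xs m, v, xs n) \<in> seg \<tau> (XX (ix m)) (ix m) (ix n - ix m)" "v = as n \<or> v = sup \<alpha> (as n)"
      by blast
    have n1n: "n \<ge> n1" using step.hyps m by simp
    have im: "ix m \<le> ix n" using ix_mono step.hyps by simp
    have sS: "seg \<tau> (XX (ix m)) (ix m) (Suc (ix n - ix m)) = mcomp (\<tau> (ix n)) (seg \<tau> (XX (ix m)) (ix m) (ix n - ix m))"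
      using im by simp
    show ?case
    proof (cases rule: nc[OF ob_T[of n], case_names bud struct ann])
      case (bud c)
      have sb: "ix (Suc n) = Suc (ix n)" "\<tau> (ix n) = mid (iobj (fst (lab (ob n))))" using step_bud[OF bud(1)] by auto
      have na: "\<not> is_ann \<delta> (ob n)" using bud by (simp add: is_ann_def)
      then have "xs (Suc n) = xs n" "as (Suc n) = as n" using ls[OF n1n] unfolding LS_def by auto
      moreover have bb: "(xs n, bot, xs n) \<in> \<tau> (ix n)" using sb xsX[OF n1n] by (simp add: mid_def)
      have "(xs m, sup v bot, xs n) \<in> mcomp (\<tau> (ix n)) (seg \<tau> (XX (ix m)) (ix m) (ix n - ix m))"
        by (rule mcomp_mem[OF v(1) bb])
      moreover have "ix (Suc n) - ix m = Suc (ix n - ix m)" using sb(1) im by simp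
      ultimately have "(xs m, sup v bot, xs (Suc n)) \<in> seg \<tau> (XX (ix m)) (ix m) (ix (Suc n) - ix m)"
        using sS by simp
      then show ?thesis using v(2) \<open>as (Suc n) = as n\<close> by auto
    next
      case struct
      have na: "\<not> is_ann \<delta> (ob n)" using struct by (simp add: is_struct_def)
      then have "xs (Suc n) = xs n" "as (Suc n) = as n" using ls[OF n1n] unfolding LS_def by auto
      moreover have "ix (Suc n) = ix n" using step_struct[OF struct(1)] by simp
      ultimately show ?thesis using v by auto
    next
      case (ann R b bs)
      have ia: "is_ann \<delta> (ob n)" using ann by (simp add: is_ann_iff)
      have sx: "ix (Suc n) = Suc (ix n)" using ann_ix[OF ia] .
      obtain c where c: "(xs n, c, xs (Suc n)) \<in> \<tau> (ix n)"
        "(as (Suc n) = sup (as n) c \<and> Ss (Suc n) = Ss n) \<or> (sup (as n) c = \<alpha> \<and> as (Suc n) = bot \<and> (\<exists>z. Ss (Suc n) = insert z (Ss n)))"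
        using ls[OF n1n] ia unfolding LS_def by auto
      have "(xs m, sup v c, xs (Suc n)) \<in> mcomp (\<tau> (ix n)) (seg \<tau> (XX (ix m)) (ix m) (ix n - ix m))"
        by (rule mcomp_mem[OF v(1) c(1)])
      moreover have "ix (Suc n) - ix m = Suc (ix n - ix m)" using sx im by simp
      ultimately have mem: "(xs m, sup v c, xs (Suc n)) \<in> seg \<tau> (XX (ix m)) (ix m) (ix (Suc n) - ix m)"
        using sS by simp
      have "sup v c = as (Suc n) \<or> sup v c = sup \<alpha> (as (Suc n))"
        using c(2)
      proof
        assume "as (Suc n) = sup (as n) c \<and> Ss (Suc n) = Ss n"
        then show ?thesis using latt1[OF v(2), of c] by simp
      next
        assume h: "sup (as n) c = \<alpha> \<and> as (Suc n) = bot \<and> (\<exists>z. Ss (Suc n) = insert z (Ss n))"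
        then have "sup v c = \<alpha>" using latt2[OF v(2)] by blast
        then show ?thesis using h by simp
      qed
      then show ?thesis using mem by blast
    qed
  qed
  define E where "E = rec_nat (SOME e. ev e) (\<lambda>j e0. SOME e. e > e0 \<and> ev e)"
  have E0: "E 0 = (SOME e. ev e)" and ES: "E (Suc j) = (SOME e. e > E j \<and> ev e)" for j by (simp_all add: E_def)
  have Eev: "ev (E j)" for j
  proof (cases j)
    case 0 then show ?thesis using E0 evinf someI_ex by metis
  next
    case (Suc j')
    have "\<exists>e. e > E j' \<and> ev e" using evinf[of "Suc (E j')"] by (blast dest: Suc_le_lessD)
    then show ?thesis using ES Suc someI_ex[of "\<lambda>e. e > E j' \<and> ev e"] by simp
  qed
  have Elt: "E j < E (Suc j)" for j
  proof -
    have "\<exists>e. e > E j \<and> ev e" using evinf[of "Suc (E j)"] by (blast dest: Suc_le_lessD)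
    then show ?thesis using ES someI_ex[of "\<lambda>e. e > E j \<and> ev e"] by simp
  qed
  define k where "k j = ix (Suc (E j))" for j
  define s where "s j = xs (Suc (E j))" for j
  have smk: "strict_mono k"
    unfolding strict_mono_Suc_iff
  proof
    fix j
    have "ix (Suc (E j)) \<le> ix (E (Suc j))" using ix_mono Elt[of j] by simp
    moreover have "ix (Suc (E (Suc j))) = Suc (ix (E (Suc j)))" using ann_ix Eev[of "Suc j"] ev_def by blast
    ultimately show "k j < k (Suc j)" by (simp add: k_def)
  qed
  have sX: "s j \<in> iobj (strip_lab T \<delta> lab (\<pi> (k j)))" for j
  proof -
    have "Suc (E j) \<ge> n1" using Eev[of j] ev_def by simp
    then show ?thesis using xsX XX_ob s_def k_def by simp
  qed
  have segs: "(s j, \<alpha>, s (Suc j)) \<in> seg \<tau> (iobj (strip_lab T \<delta> lab (\<pi> (k j)))) (k j) (k (Suc j) - k j)" for j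
  proof -
    define m where "m = Suc (E j)"
    define n where "n = E (Suc j)"
    have evj: "ev (E j)" and evn: "ev n" using Eev n_def by auto
    have m1: "m \<ge> n1" "as m = bot" using evj m_def ev_def by auto
    have mn: "m \<le> n" using Elt m_def n_def by (simp add: Suc_le_eq)
    obtain v where v: "(xs m, v, xs n) \<in> seg \<tau> (XX (ix m)) (ix m) (ix n - ix m)" "v = as n \<or> v = sup \<alpha> (as n)"
      using segl[OF m1 mn] by blast
    obtain c where c: "(xs n, c, xs (Suc n)) \<in> \<tau> (ix n)" "sup (as n) c = \<alpha>" "is_ann \<delta> (ob n)" using evn ev_def by blast
    have im: "ix m \<le> ix n" using ix_mono mn by simp
    have sx: "ix (Suc n) = Suc (ix n)" using ann_ix[OF c(3)] .
    have "(xs m, sup v c, xs (Suc n)) \<in> mcomp (\<tau> (ix n)) (seg \<tau> (XX (ix m)) (ix m) (ix n - ix m))"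
      by (rule mcomp_mem[OF v(1) c(1)])
    then have "(xs m, sup v c, xs (Suc n)) \<in> seg \<tau> (XX (ix m)) (ix m) (Suc (ix n - ix m))"
      using im by simp
    moreover have "sup v c = \<alpha>" using latt2[OF v(2) c(2)] .
    moreover have "Suc (ix n - ix m) = ix (Suc n) - ix m" using sx im by simp
    ultimately show ?thesis unfolding s_def k_def m_def n_def by simp
  qed
  show ?thesis unfolding trace_cond_def using smk sX segs by blast
qed

end

theorem mainTheorem9:
  fixes \<alpha> :: "'a::{finite, bounded_semilattice_sup_bot}"
    and Seq :: "'s set" and Rl :: "'r set"
    and concl :: "'r \<Rightarrow> 's" and prems :: "'r \<Rightarrow> 's list"
    and iobj :: "'s \<Rightarrow> 'x set" and imor :: "'r \<Rightarrow> ('x \<times> 'a \<times> 'x) set list"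
    and T :: "nat list set" and \<beta> :: "nat list \<Rightarrow> nat list option"
    and lab :: "nat list \<Rightarrow> 's \<times> ('c::countable, 'x, 'a) board"
    and \<delta> :: "nat list \<Rightarrow> ('s, 'c, 'x, 'a, 'r) rrule option"
  assumes "\<alpha> \<noteq> bot"
    and "infinite (UNIV :: 'c set)"
    and "derivation_system Seq Rl concl prems"
    and "trace_interp Seq Rl concl prems iobj imor"
    and "reset_proof \<alpha> Seq Rl concl prems iobj imor T \<beta> lab \<delta>"
  shows "iota_proof \<alpha> Seq Rl concl prems iobj imor
           (strip_T T \<delta>) (strip_beta T \<beta> \<delta>) (strip_lab T \<delta> lab) (strip_delta T \<delta>)
         \<and> strip_lab T \<delta> lab [] = fst (lab [])"
proof -
  interpret RP \<alpha> Seq Rl concl prems iobj imor T \<beta> lab \<delta>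
    using assms(1,4,5) by unfold_locales
  have tr: "\<forall>\<pi>. branch (strip_T T \<delta>) (strip_beta T \<beta> \<delta>) \<pi> \<longrightarrow>
        trace_cond \<alpha> (\<lambda>i. iobj (strip_lab T \<delta> lab (\<pi> i))) (branch_mor (strip_T T \<delta>) (strip_lab T \<delta> lab) (strip_delta T \<delta>) iobj imor \<pi>)"
  proof (intro allI impI)
    fix \<pi> assume b: "branch (strip_T T \<delta>) (strip_beta T \<beta> \<delta>) \<pi>"
    interpret RPB \<alpha> Seq Rl concl prems iobj imor T \<beta> lab \<delta> \<pi>
      using b by unfold_locales
    show "trace_cond \<alpha> (\<lambda>i. iobj (strip_lab T \<delta> lab (\<pi> i))) (branch_mor (strip_T T \<delta>) (strip_lab T \<delta> lab) (strip_delta T \<delta>) iobj imor \<pi>)"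
      by (rule trace)
  qed
  show ?thesis unfolding iota_proof_def using strip_preproof strip_af tr strip_root by blast
qed

end
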